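(* Let $\Gamma$ be a skew-symmetric graph with three vertices $\{1,2,3\}$ and adjacency entries $a_{1,2}=1$, $a_{1,3}=\alpha$, $a_{2,3}=\beta$ ($\alpha,\beta\in\mathbb F$). Then $\Gamma$ has the Kahan-Poisson property if and only if $(\alpha,\beta)\in\{(0,0),(0,-1),(1,0),(1,-1),(1,1),(-1,-1)\}$.
   Context: $\mathbb F\in\{\mathbb R,\mathbb C\}$. A skew-symmetric graph $\Gamma=(S,A)$ has $A=(a_{i,j})$ skew-symmetric over $\mathbb F$. Its Poisson bracket on $\mathbb F(x_1,x_2,x_3)$ is $\{x_i,x_j\}=a_{i,j}x_ix_j$; its Kahan morphism is $K(x_i)=\tilde x_i$, where $\tilde x_i$ is the unique solution of the linear system $\tilde x_i-x_i=\tilde x_i\sum_ja_{i,j}x_j+x_i\sum_ja_{i,j}\tilde x_j$; $\Gamma$ has the Kahan-Poisson property if $\{\tilde x_i,\tilde x_j\}=a_{i,j}\tilde x_i\tilde x_j$ for all $i,j$. *)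

theory Defs
  imports "HOL-Analysis.Analysis"
begin

text \<open>Vertices are 1, 2, 3.  A point of F^3 is a function p :: nat => F, of which
only p 1, p 2, p 3 are used.  Rational functions in x1,x2,x3 are represented by
the functions they induce on points.\<close>

definition verts :: "nat set" where "verts = {1,2,3}"

definition skew_symmetric :: "(nat \<Rightarrow> nat \<Rightarrow> 'a::real_normed_field) \<Rightarrow> bool" where
  "skew_symmetric A \<longleftrightarrow> (\<forall>i\<in>verts. \<forall>j\<in>verts. A i j = - A j i)"

definition graph3 :: "'a::real_normed_field \<Rightarrow> 'a \<Rightarrow> nat \<Rightarrow> nat \<Rightarrow> 'a" where
  "graph3 \<alpha> \<beta> i j =
     (if (i,j) = (1,2) then 1 else if (i,j) = (2,1) then -1
      else if (i,j) = (1,3) then \<alpha> else if (i,j) = (3,1) then - \<alpha>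
      else if (i,j) = (2,3) then \<beta> else if (i,j) = (3,2) then - \<beta> else 0)"

definition pderiv3 :: "((nat \<Rightarrow> 'a::real_normed_field) \<Rightarrow> 'a) \<Rightarrow> nat \<Rightarrow> (nat \<Rightarrow> 'a) \<Rightarrow> 'a" where
  "pderiv3 f k p = deriv (\<lambda>t. f (p(k := t))) (p k)"

text \<open>Poisson bracket induced by {x_i,x_j} = a_ij x_i x_j (extended by Leibniz rule).\<close>
definition pbracket ::
  "(nat \<Rightarrow> nat \<Rightarrow> 'a::real_normed_field) \<Rightarrow> ((nat \<Rightarrow> 'a) \<Rightarrow> 'a) \<Rightarrow> ((nat \<Rightarrow> 'a) \<Rightarrow> 'a) \<Rightarrow> (nat \<Rightarrow> 'a) \<Rightarrow> 'a" where
  "pbracket A f g p = (\<Sum>i\<in>verts. \<Sum>j\<in>verts. A i j * p i * p j * pderiv3 f i p * pderiv3 g j p)"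

definition kahan_sys :: "(nat \<Rightarrow> nat \<Rightarrow> 'a::real_normed_field) \<Rightarrow> (nat \<Rightarrow> 'a) \<Rightarrow> (nat \<Rightarrow> 'a) \<Rightarrow> bool" where
  "kahan_sys A p y \<longleftrightarrow> (\<forall>i. i \<notin> verts \<longrightarrow> y i = 0) \<and>
     (\<forall>i\<in>verts. y i - p i = y i * (\<Sum>j\<in>verts. A i j * p j) + p i * (\<Sum>j\<in>verts. A i j * y j))"

definition kahan_regular :: "(nat \<Rightarrow> nat \<Rightarrow> 'a::real_normed_field) \<Rightarrow> (nat \<Rightarrow> 'a) \<Rightarrow> bool" where
  "kahan_regular A p \<longleftrightarrow> (\<exists>!y. kahan_sys A p y)"

definition kahan :: "(nat \<Rightarrow> nat \<Rightarrow> 'a::real_normed_field) \<Rightarrow> (nat \<Rightarrow> 'a) \<Rightarrow> nat \<Rightarrow> 'a" where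
  "kahan A p = (THE y. kahan_sys A p y)"

text \<open>Kahan-Poisson property: {x~_i, x~_j} = a_ij x~_i x~_j as rational functions,
i.e. at every point where the Kahan map is defined.\<close>
definition kahan_poisson :: "(nat \<Rightarrow> nat \<Rightarrow> 'a::real_normed_field) \<Rightarrow> bool" where
  "kahan_poisson A \<longleftrightarrow> (\<forall>p. kahan_regular A p \<longrightarrow>
     (\<forall>i\<in>verts. \<forall>j\<in>verts.
        pbracket A (\<lambda>q. kahan A q i) (\<lambda>q. kahan A q j) p = A i j * kahan A p i * kahan A p j))"

end

theory Submission
  imports Defs
begin

lemma sum_verts: "(\<Sum>j\<in>verts. f j) = f 1 + f 2 + f 3"
  by (simp add: verts_def add.assoc)

lemma lin3_zero:
  fixes m11 m12 m13 m21 m22 m23 m31 m32 m33 x1 x2 x3 :: "'a::field"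
  assumes d: "m11 * (m22 * m33 - m23 * m32) - m12 * (m21 * m33 - m23 * m31) + m13 * (m21 * m32 - m22 * m31) \<noteq> 0"
    and e1: "m11 * x1 + m12 * x2 + m13 * x3 = 0"
    and e2: "m21 * x1 + m22 * x2 + m23 * x3 = 0"
    and e3: "m31 * x1 + m32 * x2 + m33 * x3 = 0"
  shows "x1 = 0 \<and> x2 = 0 \<and> x3 = 0"
proof -
  let ?d = "m11 * (m22 * m33 - m23 * m32) - m12 * (m21 * m33 - m23 * m31) + m13 * (m21 * m32 - m22 * m31)"
  have "?d * x1 = (m22 * m33 - m23 * m32) * (m11 * x1 + m12 * x2 + m13 * x3) - (m12 * m33 - m13 * m32) * (m21 * x1 + m22 * x2 + m23 * x3) + (m12 * m23 - m13 * m22) * (m31 * x1 + m32 * x2 + m33 * x3)"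
    by algebra
  hence 1: "?d * x1 = 0" using e1 e2 e3 by simp
  have "?d * x2 = - (m21 * m33 - m23 * m31) * (m11 * x1 + m12 * x2 + m13 * x3) + (m11 * m33 - m13 * m31) * (m21 * x1 + m22 * x2 + m23 * x3) - (m11 * m23 - m13 * m21) * (m31 * x1 + m32 * x2 + m33 * x3)"
    by algebra
  hence 2: "?d * x2 = 0" using e1 e2 e3 by simp
  have "?d * x3 = (m21 * m32 - m22 * m31) * (m11 * x1 + m12 * x2 + m13 * x3) - (m11 * m32 - m12 * m31) * (m21 * x1 + m22 * x2 + m23 * x3) + (m11 * m22 - m12 * m21) * (m31 * x1 + m32 * x2 + m33 * x3)"
    by algebra
  hence 3: "?d * x3 = 0" using e1 e2 e3 by simp
  from 1 2 3 d show ?thesis by simp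
qed

definition Mx :: "'a::real_normed_field \<Rightarrow> 'a \<Rightarrow> (nat \<Rightarrow> 'a) \<Rightarrow> nat \<Rightarrow> nat \<Rightarrow> 'a" where
  "Mx a b p i j = (if i = j then 1 - (\<Sum>k\<in>verts. graph3 a b i k * p k) else 0) - p i * graph3 a b i j"

definition det3 :: "(nat \<Rightarrow> nat \<Rightarrow> 'a::field) \<Rightarrow> 'a" where
  "det3 M = M 1 1 * (M 2 2 * M 3 3 - M 2 3 * M 3 2) - M 1 2 * (M 2 1 * M 3 3 - M 2 3 * M 3 1) + M 1 3 * (M 2 1 * M 3 2 - M 2 2 * M 3 1)"

definition Dp :: "'a::real_normed_field \<Rightarrow> 'a \<Rightarrow> (nat \<Rightarrow> 'a) \<Rightarrow> 'a" where
  "Dp a b p = ((p 1)^2*a - (p 1)*(p 2)*a + (p 1)*(p 2)*b - (p 1)*(p 3)*a*b - (p 1)*(p 3)*a + (p 1)*a + (p 1) - (p 2)^2*b - (p 2)*(p 3)*a*b + (p 2)*(p 3)*b + (p 2)*b - (p 2) + (p 3)^2*a*b - (p 3)*a - (p 3)*b + 1)"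

definition Np :: "'a::real_normed_field \<Rightarrow> 'a \<Rightarrow> (nat \<Rightarrow> 'a) \<Rightarrow> nat \<Rightarrow> 'a" where
  "Np a b p i = (if i = 1 then ((p 1)^3*a + (p 1)^2*(p 2)*a + (p 1)^2*(p 2)*b - (p 1)^2*(p 3)*a*b + (p 1)^2*(p 3)*a + (p 1)^2*a + (p 1)^2 + (p 1)*(p 2)^2*b - (p 1)*(p 2)*(p 3)*a*b + (p 1)*(p 2)*(p 3)*b + (p 1)*(p 2)*b + (p 1)*(p 2) - (p 1)*(p 3)^2*a*b + (p 1)*(p 3)*a - (p 1)*(p 3)*b + (p 1)) else if i = 2 then (- ((p 1)^2*(p 2)*a) - (p 1)*(p 2)^2*a - (p 1)*(p 2)^2*b - (p 1)*(p 2)*(p 3)*a*b - (p 1)*(p 2)*(p 3)*a + (p 1)*(p 2)*a - (p 1)*(p 2) - (p 2)^3*b - (p 2)^2*(p 3)*a*b - (p 2)^2*(p 3)*b + (p 2)^2*b - (p 2)^2 - (p 2)*(p 3)^2*a*b - (p 2)*(p 3)*a + (p 2)*(p 3)*b + (p 2)) else if i = 3 then (- ((p 1)^2*(p 3)*a) - (p 1)*(p 2)*(p 3)*a + (p 1)*(p 2)*(p 3)*b + (p 1)*(p 3)^2*a*b - (p 1)*(p 3)^2*a - (p 1)*(p 3)*a + (p 1)*(p 3) + (p 2)^2*(p 3)*b + (p 2)*(p 3)^2*a*b + (p 2)*(p 3)^2*b - (p 2)*(p 3)*b - (p 2)*(p 3) + (p 3)^3*a*b - (p 3)^2*a - (p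 3)^2*b + (p 3)) else 0)"

definition dDp :: "'a::real_normed_field \<Rightarrow> 'a \<Rightarrow> (nat \<Rightarrow> 'a) \<Rightarrow> nat \<Rightarrow> 'a" where
  "dDp a b p k = (if k = 1 then (2*(p 1)*a - (p 2)*a + (p 2)*b - (p 3)*a*b - (p 3)*a + a + 1) else if k = 2 then (- ((p 1)*a) + (p 1)*b - 2*(p 2)*b - (p 3)*a*b + (p 3)*b + b - 1) else if k = 3 then (- ((p 1)*a*b) - (p 1)*a - (p 2)*a*b + (p 2)*b + 2*(p 3)*a*b - a - b) else 0)"

definition dNp :: "'a::real_normed_field \<Rightarrow> 'a \<Rightarrow> (nat \<Rightarrow> 'a) \<Rightarrow> nat \<Rightarrow> nat \<Rightarrow> 'a" where
  "dNp a b p i k = (if i = 1 then (if k = 1 then (3*(p 1)^2*a + 2*(p 1)*(p 2)*a + 2*(p 1)*(p 2)*b - 2*(p 1)*(p 3)*a*b + 2*(p 1)*(p 3)*a + 2*(p 1)*a + 2*(p 1) + (p 2)^2*b - (p 2)*(p 3)*a*b + (p 2)*(p 3)*b + (p 2)*b + (p 2) - (p 3)^2*a*b + (p 3)*a - (p 3)*b + 1) else if k = 2 then ((p 1)^2*a + (p 1)^2*b + 2*(p 1)*(p 2)*b - (p 1)*(p 3)*a*b + (p 1)*(p 3)*b + (p 1)*b + (p 1)) else if k = 3 then (- ((p 1)^2*a*b) + (p 1)^2*a - (p 1)*(p 2)*a*b + (p 1)*(p 2)*b - 2*(p 1)*(p 3)*a*b + (p 1)*a - (p 1)*b) else 0)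 else if i = 2 then (if k = 1 then (- (2*(p 1)*(p 2)*a) - (p 2)^2*a - (p 2)^2*b - (p 2)*(p 3)*a*b - (p 2)*(p 3)*a + (p 2)*a - (p 2)) else if k = 2 then (- ((p 1)^2*a) - 2*(p 1)*(p 2)*a - 2*(p 1)*(p 2)*b - (p 1)*(p 3)*a*b - (p 1)*(p 3)*a + (p 1)*a - (p 1) - 3*(p 2)^2*b - 2*(p 2)*(p 3)*a*b - 2*(p 2)*(p 3)*b + 2*(p 2)*b - 2*(p 2) - (p 3)^2*a*b - (p 3)*a + (p 3)*b + 1) else if k = 3 then (- ((p 1)*(p 2)*a*b) - (p 1)*(p 2)*a - (p 2)^2*a*b - (p 2)^2*b - 2*(p 2)*(p 3)*a*b - (p 2)*a + (p 2)*b) else 0) else if i = 3 then (if k = 1 then (- (2*(p 1)*(p 3)*a) - (p 2)*(p 3)*a + (p 2)*(p 3)*b + (p 3)^2*a*b - (p 3)^2*a - (p 3)*a + (p 3)) else if k = 2 then (- ((p 1)*(p 3)*a) + (p 1)*(p 3)*b + 2*(p 2)*(p 3)*b + (p 3)^2*a*b + (p 3)^2*b - (p 3)*b - (p 3)) else if k = 3 then (- ((p 1)^2*a) - (p 1)*(p 2)*a + (p 1)*(p 2)*b + 2*(p 1)*(p 3)*a*b - 2*(p 1)*(p 3)*a - (p 1)*a + (p 1) + (p 2)^2*b + 2*(p 2)*(p 3)*a*b + 2*(p 2)*(p 3)*b - (p 2)*b - (p 2) + 3*(p 3)^2*a*b - 2*(p 3)*a - 2*(p 3)*b + 1) else 0)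 else 0)"

lemma g3: "graph3 a b 1 1 = 0" "graph3 a b 1 2 = 1" "graph3 a b 1 3 = a"
  "graph3 a b 2 1 = -1" "graph3 a b 2 2 = 0" "graph3 a b 2 3 = b"
  "graph3 a b 3 1 = -a" "graph3 a b 3 2 = -b" "graph3 a b 3 3 = 0"
  by (simp_all add: graph3_def)

lemma verts_cases: "i \<in> verts \<Longrightarrow> i = 1 \<or> i = 2 \<or> i = 3"
  by (auto simp: verts_def)

lemma kahan_sys_iff:
  "kahan_sys (graph3 a b) p y \<longleftrightarrow> (\<forall>i. i \<notin> verts \<longrightarrow> y i = 0) \<and>
     (\<forall>i\<in>verts. (\<Sum>j\<in>verts. Mx a b p i j * y j) = p i)"
proof -
  have "(y i - p i = y i * (\<Sum>j\<in>verts. graph3 a b i j * p j) + p i * (\<Sum>j\<in>verts. graph3 a b i j * y j))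
     \<longleftrightarrow> (\<Sum>j\<in>verts. Mx a b p i j * y j) = p i" if "i \<in> verts" for i
  proof -
    have "(\<Sum>j\<in>verts. Mx a b p i j * y j) = y i * (1 - (\<Sum>j\<in>verts. graph3 a b i j * p j)) - p i * (\<Sum>j\<in>verts. graph3 a b i j * y j)"
      using verts_cases[OF that] by (auto simp: Mx_def sum_verts graph3_def algebra_simps)
    moreover have "(y i - p i) - (y i * (\<Sum>j\<in>verts. graph3 a b i j * p j) + p i * (\<Sum>j\<in>verts. graph3 a b i j * y j))
       = (y i * (1 - (\<Sum>j\<in>verts. graph3 a b i j * p j)) - p i * (\<Sum>j\<in>verts. graph3 a b i j * y j)) - p i"
      by (simp add: algebra_simps)
    ultimately show ?thesis by (simp only: eq_iff_diff_eq_0[of "y i - p i"] eq_iff_diff_eq_0[of "(\<Sum>j\<in>verts. Mx a b p i j * y j)"]) simp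
  qed
  then show ?thesis unfolding kahan_sys_def by auto
qed

lemma Dp_det: "Dp a b p = det3 (Mx a b p)"
  by (simp add: Dp_def det3_def Mx_def sum_verts graph3_def) algebra

lemma cramer1: "(\<Sum>j\<in>verts. Mx a b p 1 j * Np a b p j) = Dp a b p * p 1"
  by (simp add: Dp_def Np_def Mx_def sum_verts graph3_def) algebra
lemma cramer2: "(\<Sum>j\<in>verts. Mx a b p 2 j * Np a b p j) = Dp a b p * p 2"
  by (simp add: Dp_def Np_def Mx_def sum_verts graph3_def) algebra
lemma cramer3: "(\<Sum>j\<in>verts. Mx a b p 3 j * Np a b p j) = Dp a b p * p 3"
  by (simp add: Dp_def Np_def Mx_def sum_verts graph3_def) algebra

lemma ker3:
  fixes m11 m12 m13 m21 m22 m23 m31 m32 m33 :: "'a::field"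
  assumes d: "m11 * (m22 * m33 - m23 * m32) - m12 * (m21 * m33 - m23 * m31) + m13 * (m21 * m32 - m22 * m31) = 0"
  shows "\<exists>x1 x2 x3. \<not> (x1 = 0 \<and> x2 = 0 \<and> x3 = 0) \<and> m11 * x1 + m12 * x2 + m13 * x3 = 0 \<and>
     m21 * x1 + m22 * x2 + m23 * x3 = 0 \<and> m31 * x1 + m32 * x2 + m33 * x3 = 0"
proof -
  have wit: "\<And>x1 x2 x3. \<not> (x1 = 0 \<and> x2 = 0 \<and> x3 = 0) \<Longrightarrow> m11 * x1 + m12 * x2 + m13 * x3 = 0 \<Longrightarrow>
     m21 * x1 + m22 * x2 + m23 * x3 = 0 \<Longrightarrow> m31 * x1 + m32 * x2 + m33 * x3 = 0 \<Longrightarrow> ?thesis"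
    by blast
  show ?thesis
  proof (cases "m22 * m33 - m23 * m32 = 0 \<and> m23 * m31 - m21 * m33 = 0 \<and> m21 * m32 - m22 * m31 = 0")
    case False
    show ?thesis
      apply (rule wit[of "m22 * m33 - m23 * m32" "m23 * m31 - m21 * m33" "m21 * m32 - m22 * m31"])
      subgoal using False by simp
      subgoal using d by algebra
      subgoal by algebra
      subgoal by algebra
      done
  next
    case c1: True
    show ?thesis
    proof (cases "m32 * m13 - m33 * m12 = 0 \<and> m33 * m11 - m31 * m13 = 0 \<and> m31 * m12 - m32 * m11 = 0")
      case False
      show ?thesis
        apply (rule wit[of "m32 * m13 - m33 * m12" "m33 * m11 - m31 * m13" "m31 * m12 - m32 * m11"])
        subgoal using False by simp
        subgoal by algebra
        subgoal using d by algebra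
        subgoal by algebra
        done
    next
      case c2: True
      show ?thesis
      proof (cases "m12 * m23 - m13 * m22 = 0 \<and> m13 * m21 - m11 * m23 = 0 \<and> m11 * m22 - m12 * m21 = 0")
        case False
        show ?thesis
          apply (rule wit[of "m12 * m23 - m13 * m22" "m13 * m21 - m11 * m23" "m11 * m22 - m12 * m21"])
          subgoal using False by simp
          subgoal by algebra
          subgoal by algebra
          subgoal using d by algebra
          done
      next
        case c3: True
        show ?thesis
        proof (cases "m11 \<noteq> 0 \<or> m12 \<noteq> 0")
          case True
          show ?thesis
            apply (rule wit[of m12 "- m11" 0])
            subgoal using True by auto
            subgoal by algebra
            subgoal by (insert c3, elim conjE, algebra)
            subgoal by (insert c2, elim conjE, algebra)
            done
        next
          case r1a: False
          show ?thesis
          proof (cases "m13 \<noteq> 0")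
            case True
            show ?thesis
              apply (rule wit[of m13 0 "- m11"])
              subgoal using True by auto
              subgoal by algebra
              subgoal by (insert c3, elim conjE, algebra)
              subgoal by (insert c2, elim conjE, algebra)
              done
          next
            case r1b: False
            show ?thesis
            proof (cases "m21 \<noteq> 0 \<or> m22 \<noteq> 0")
              case True
              show ?thesis
                apply (rule wit[of m22 "- m21" 0])
                subgoal using True by auto
                subgoal using r1a r1b by simp
                subgoal by algebra
                subgoal by (insert c1, elim conjE, algebra)
                done
            next
              case r2a: False
              show ?thesis
              proof (cases "m23 \<noteq> 0")
                case True
                show ?thesis
                  apply (rule wit[of m23 0 "- m21"])
                  subgoal using True by auto
                  subgoal using r1a r1b by simp
                  subgoal by algebra
                  subgoal by (insert c1, elim conjE, algebra)
                  done
              next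
                case r2b: False
                show ?thesis
                proof (cases "m31 \<noteq> 0 \<or> m32 \<noteq> 0")
                  case True
                  show ?thesis
                    apply (rule wit[of m32 "- m31" 0])
                    subgoal using True by auto
                    subgoal using r1a r1b by simp
                    subgoal using r2a r2b by simp
                    subgoal by algebra
                    done
                next
                  case r3a: False
                  show ?thesis
                  proof (cases "m33 \<noteq> 0")
                    case True
                    show ?thesis
                      apply (rule wit[of m33 0 "- m31"])
                      subgoal using True by auto
                      subgoal using r1a r1b by simp
                      subgoal using r2a r2b by simp
                      subgoal by algebra
                      done
                  next
                    case False
                    show ?thesis
                      apply (rule wit[of 1 0 0])
                      using r1a r1b r2a r2b r3a False by simp_all
                  qed
                qed
              qed
            qed
          qed
        qed
      qed
    qed
  qed
qed

definition sol :: "'a::real_normed_field \<Rightarrow> 'a \<Rightarrow> (nat \<Rightarrow> 'a) \<Rightarrow> nat \<Rightarrow> 'a" where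
  "sol a b p = (\<lambda>i. if i \<in> verts then Np a b p i / Dp a b p else 0)"

lemma verts_simps [simp]: "1 \<in> verts" "Suc 0 \<in> verts" "2 \<in> verts" "3 \<in> verts"
  by (auto simp: verts_def)

lemma sol_sys:
  assumes "Dp a b p \<noteq> 0"
  shows "kahan_sys (graph3 a b) p (sol a b p)"
proof -
  have "(\<Sum>j\<in>verts. Mx a b p i j * sol a b p j) = p i" if iv: "i \<in> verts" for i
  proof -
    have "(\<Sum>j\<in>verts. Mx a b p i j * sol a b p j) = (\<Sum>j\<in>verts. Mx a b p i j * Np a b p j) / Dp a b p"
      by (simp add: sum_verts sol_def add_divide_distrib)
    also have "\<dots> = p i"
    proof -
      consider "i = 1" | "i = 2" | "i = 3" using verts_cases[OF iv] by blast
      then show ?thesis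
      proof cases
        case 1 then show ?thesis using assms by (simp only: cramer1) simp
      next
        case 2 then show ?thesis using assms by (simp only: cramer2) simp
      next
        case 3 then show ?thesis using assms by (simp only: cramer3) simp
      qed
    qed
    finally show ?thesis .
  qed
  then show ?thesis unfolding kahan_sys_iff by (auto simp: sol_def)
qed

lemma sys3:
  assumes "kahan_sys (graph3 a b) p y"
  shows "Mx a b p 1 1 * y 1 + Mx a b p 1 2 * y 2 + Mx a b p 1 3 * y 3 = p 1"
    "Mx a b p 2 1 * y 1 + Mx a b p 2 2 * y 2 + Mx a b p 2 3 * y 3 = p 2"
    "Mx a b p 3 1 * y 1 + Mx a b p 3 2 * y 2 + Mx a b p 3 3 * y 3 = p 3"
proof -
  have H: "\<forall>i\<in>verts. (\<Sum>j\<in>verts. Mx a b p i j * y j) = p i" using assms unfolding kahan_sys_iff by blast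
  show "Mx a b p 1 1 * y 1 + Mx a b p 1 2 * y 2 + Mx a b p 1 3 * y 3 = p 1"
    using H[rule_format, of 1] by (simp add: sum_verts)
  show "Mx a b p 2 1 * y 1 + Mx a b p 2 2 * y 2 + Mx a b p 2 3 * y 3 = p 2"
    using H[rule_format, of 2] by (simp add: sum_verts)
  show "Mx a b p 3 1 * y 1 + Mx a b p 3 2 * y 2 + Mx a b p 3 3 * y 3 = p 3"
    using H[rule_format, of 3] by (simp add: sum_verts)
qed

lemma sol_uniq:
  assumes "Dp a b p \<noteq> 0" "kahan_sys (graph3 a b) p y" "kahan_sys (graph3 a b) p z"
  shows "y = z"
proof -
  note y = sys3[OF assms(2)] and z = sys3[OF assms(3)]
  have "y 1 - z 1 = 0 \<and> y 2 - z 2 = 0 \<and> y 3 - z 3 = 0"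
    apply (rule lin3_zero[of "Mx a b p 1 1" "Mx a b p 2 2" "Mx a b p 3 3" "Mx a b p 2 3" "Mx a b p 3 2" "Mx a b p 1 2" "Mx a b p 2 1" "Mx a b p 3 1" "Mx a b p 1 3"])
    subgoal using assms(1) by (simp add: Dp_det det3_def)
    subgoal using y(1) z(1) by (simp add: algebra_simps)
    subgoal using y(2) z(2) by (simp add: algebra_simps)
    subgoal using y(3) z(3) by (simp add: algebra_simps)
    done
  moreover have "\<forall>i. i \<notin> verts \<longrightarrow> y i = 0" "\<forall>i. i \<notin> verts \<longrightarrow> z i = 0"
    using assms(2,3) unfolding kahan_sys_def by auto
  ultimately show ?thesis
  proof (intro ext)
    fix i show "y i = z i"
    proof (cases "i \<in> verts")
      case True
      then show ?thesis using verts_cases[OF True] \<open>y 1 - z 1 = 0 \<and> y 2 - z 2 = 0 \<and> y 3 - z 3 = 0\<close> by auto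
    next
      case False
      then show ?thesis using assms(2,3) unfolding kahan_sys_def by auto
    qed
  qed
qed

lemma notreg:
  assumes "Dp a b p = 0"
  shows "\<not> kahan_regular (graph3 a b) p"
proof
  assume "kahan_regular (graph3 a b) p"
  then obtain y where y: "kahan_sys (graph3 a b) p y" and u: "\<And>z. kahan_sys (graph3 a b) p z \<Longrightarrow> z = y"
    unfolding kahan_regular_def by blast
  have "det3 (Mx a b p) = 0" using assms by (simp add: Dp_det)
  then obtain x1 x2 x3 where nz: "\<not> (x1 = 0 \<and> x2 = 0 \<and> x3 = 0)"
    and e1: "Mx a b p 1 1 * x1 + Mx a b p 1 2 * x2 + Mx a b p 1 3 * x3 = 0"
    and e2: "Mx a b p 2 1 * x1 + Mx a b p 2 2 * x2 + Mx a b p 2 3 * x3 = 0"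
    and e3: "Mx a b p 3 1 * x1 + Mx a b p 3 2 * x2 + Mx a b p 3 3 * x3 = 0"
    using ker3[of "Mx a b p 1 1" "Mx a b p 2 2" "Mx a b p 3 3" "Mx a b p 2 3" "Mx a b p 3 2" "Mx a b p 1 2" "Mx a b p 2 1" "Mx a b p 3 1" "Mx a b p 1 3"]
    unfolding det3_def by blast
  define w where "w = (\<lambda>i::nat. if i = 1 then x1 else if i = 2 then x2 else if i = 3 then x3 else 0)"
  define z where "z = (\<lambda>i. y i + w i)"
  note ys = sys3[OF y]
  have "kahan_sys (graph3 a b) p z"
    unfolding kahan_sys_iff
  proof (intro conjI ballI allI impI)
    fix i assume "i \<notin> verts"
    then show "z i = 0" using y unfolding kahan_sys_def z_def w_def by (auto simp: verts_def)
  next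
    fix i assume "i \<in> verts"
    then consider "i = 1" | "i = 2" | "i = 3" using verts_cases by blast
    then show "(\<Sum>j\<in>verts. Mx a b p i j * z j) = p i"
    proof cases
      case 1 then show ?thesis using ys(1) e1 by (simp add: sum_verts z_def w_def algebra_simps)
    next
      case 2 then show ?thesis using ys(2) e2 by (simp add: sum_verts z_def w_def algebra_simps)
    next
      case 3 then show ?thesis using ys(3) e3 by (simp add: sum_verts z_def w_def algebra_simps)
    qed
  qed
  then have "z = y" by (rule u)
  then have "y i + w i = y i" for i unfolding z_def by (rule fun_cong)
  then have "w i = 0" for i by simp
  then have "w 1 = 0" "w 2 = 0" "w 3 = 0" by auto
  with nz show False by (simp add: w_def)
qed

lemma reg_iff: "kahan_regular (graph3 a b) p \<longleftrightarrow> Dp a b p \<noteq> 0"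
proof
  assume "kahan_regular (graph3 a b) p" then show "Dp a b p \<noteq> 0" using notreg by blast
next
  assume "Dp a b p \<noteq> 0" then show "kahan_regular (graph3 a b) p"
    unfolding kahan_regular_def using sol_sys sol_uniq by blast
qed

lemma kahan_eq: "Dp a b p \<noteq> 0 \<Longrightarrow> kahan (graph3 a b) p = sol a b p"
  unfolding kahan_def by (rule the_equality) (use sol_sys sol_uniq in blast)+

lemma dD: assumes "k \<in> verts"
  shows "((\<lambda>s. Dp a b (p(k:=s))) has_field_derivative dDp a b (p(k:=t)) k) (at t)"
  using verts_cases[OF assms]
  apply (elim disjE)
  apply (simp_all add: Dp_def dDp_def)
  apply ((rule derivative_eq_intros refl | simp)+)
  done

lemma dN: assumes "i \<in> verts" "k \<in> verts"
  shows "((\<lambda>s. Np a b (p(k:=s)) i) has_field_derivative dNp a b (p(k:=t)) i k) (at t)"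
  using verts_cases[OF assms(1)] verts_cases[OF assms(2)]
  apply (elim disjE)
  apply (simp_all add: Np_def dNp_def)
  apply ((rule derivative_eq_intros refl | simp)+)
  done

definition Jp :: "'a::real_normed_field \<Rightarrow> 'a \<Rightarrow> (nat \<Rightarrow> 'a) \<Rightarrow> nat \<Rightarrow> nat \<Rightarrow> 'a" where
  "Jp a b p i k = (dNp a b p i k * Dp a b p - Np a b p i * dDp a b p k) / (Dp a b p * Dp a b p)"

lemma pderiv_kahan:
  assumes D: "Dp a b p \<noteq> 0" and i: "i \<in> verts" and k: "k \<in> verts"
  shows "pderiv3 (\<lambda>q. kahan (graph3 a b) q i) k p = Jp a b p i k"
proof -
  let ?S = "{t. Dp a b (p(k:=t)) \<noteq> 0}"
  have "continuous_on UNIV (\<lambda>t. Dp a b (p(k:=t)))"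
    by (rule continuous_at_imp_continuous_on) (use dD[OF k] DERIV_isCont in blast)
  then have S: "open ?S" by (rule open_Collect_neq[OF _ continuous_on_const])
  have pk: "p k \<in> ?S" using D by simp
  have "((\<lambda>t. Np a b (p(k:=t)) i / Dp a b (p(k:=t))) has_field_derivative Jp a b p i k) (at (p k))"
    using DERIV_divide[OF dN[OF i k, of a b p "p k"] dD[OF k, of a b p "p k"]] D
    by (simp add: Jp_def)
  then have "((\<lambda>t. kahan (graph3 a b) (p(k:=t)) i) has_field_derivative Jp a b p i k) (at (p k))"
    by (rule has_field_derivative_transform_within_open[OF _ S pk])
       (simp add: kahan_eq sol_def i)
  then show ?thesis unfolding pderiv3_def by (rule DERIV_imp_deriv)
qed

lemma rearr:
  fixes M J B P :: "nat \<Rightarrow> nat \<Rightarrow> 'a::field"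
  assumes MJ: "\<And>i k. i \<in> verts \<Longrightarrow> k \<in> verts \<Longrightarrow> (\<Sum>j\<in>verts. M i j * J j k) = B i k"
    and a: "a \<in> verts" and b: "b \<in> verts"
  shows "(\<Sum>k\<in>verts. \<Sum>l\<in>verts. M a k * (\<Sum>i\<in>verts. \<Sum>j\<in>verts. J k i * P i j * J l j) * M b l)
       = (\<Sum>i\<in>verts. \<Sum>j\<in>verts. B a i * P i j * B b j)"
proof -
  have "(\<Sum>i\<in>verts. \<Sum>j\<in>verts. B a i * P i j * B b j)
      = (\<Sum>i\<in>verts. \<Sum>j\<in>verts. (\<Sum>k\<in>verts. M a k * J k i) * P i j * (\<Sum>l\<in>verts. M b l * J l j))"
    using MJ a b by (intro sum.cong refl) simp
  also have "\<dots> = (\<Sum>k\<in>verts. \<Sum>l\<in>verts. M a k * (\<Sum>i\<in>verts. \<Sum>j\<in>verts. J k i * P i j * J l j) * M b l)"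
    unfolding sum_verts by algebra
  finally show ?thesis by simp
qed

lemma mat_cancel:
  fixes M J B P Q :: "nat \<Rightarrow> nat \<Rightarrow> 'a::field"
  assumes det: "det3 M \<noteq> 0"
    and MJ: "\<And>i k. i \<in> verts \<Longrightarrow> k \<in> verts \<Longrightarrow> (\<Sum>j\<in>verts. M i j * J j k) = B i k"
    and BPB: "\<And>a b. a \<in> verts \<Longrightarrow> b \<in> verts \<Longrightarrow>
       (\<Sum>i\<in>verts. \<Sum>j\<in>verts. B a i * P i j * B b j) = (\<Sum>k\<in>verts. \<Sum>l\<in>verts. M a k * Q k l * M b l)"
    and i: "i \<in> verts" and j: "j \<in> verts"
  shows "(\<Sum>k\<in>verts. \<Sum>l\<in>verts. J i k * P k l * J j l) = Q i j"
proof -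
  define Z where "Z k l = (\<Sum>i\<in>verts. \<Sum>j\<in>verts. J k i * P i j * J l j) - Q k l" for k l
  define W where "W k b = (\<Sum>l\<in>verts. Z k l * M b l)" for k b
  have MZM: "(\<Sum>k\<in>verts. M a k * W k b) = 0" if a: "a \<in> verts" and b: "b \<in> verts" for a b
  proof -
    have "(\<Sum>k\<in>verts. M a k * W k b) = (\<Sum>k\<in>verts. \<Sum>l\<in>verts. M a k * (\<Sum>i\<in>verts. \<Sum>j\<in>verts. J k i * P i j * J l j) * M b l)
       - (\<Sum>k\<in>verts. \<Sum>l\<in>verts. M a k * Q k l * M b l)"
      unfolding W_def Z_def sum_verts by algebra
    also have "\<dots> = 0"
    proof -
      have "(\<Sum>k\<in>verts. \<Sum>l\<in>verts. M a k * (\<Sum>i\<in>verts. \<Sum>j\<in>verts. J k i * P i j * J l j) * M b l)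
       = (\<Sum>i\<in>verts. \<Sum>j\<in>verts. B a i * P i j * B b j)"
        by (rule rearr) (simp_all add: MJ a b)
      then show ?thesis using BPB[OF a b] by simp
    qed
    finally show ?thesis .
  qed
  have W0: "W k b = 0" if k: "k \<in> verts" and b: "b \<in> verts" for k b
  proof -
    have "W 1 b = 0 \<and> W 2 b = 0 \<and> W 3 b = 0"
      apply (rule lin3_zero[of "M 1 1" "M 2 2" "M 3 3" "M 2 3" "M 3 2" "M 1 2" "M 2 1" "M 3 1" "M 1 3"])
      subgoal using det by (simp add: det3_def)
      subgoal using MZM[OF _ b, of 1] by (simp add: sum_verts)
      subgoal using MZM[OF _ b, of 2] by (simp add: sum_verts)
      subgoal using MZM[OF _ b, of 3] by (simp add: sum_verts)
      done
    then show ?thesis using verts_cases[OF k] by auto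
  qed
  have "Z k 1 = 0 \<and> Z k 2 = 0 \<and> Z k 3 = 0" if k: "k \<in> verts" for k
    apply (rule lin3_zero[of "M 1 1" "M 2 2" "M 3 3" "M 2 3" "M 3 2" "M 1 2" "M 2 1" "M 3 1" "M 1 3"])
    subgoal using det by (simp add: det3_def)
    subgoal using W0[OF k, of 1] by (simp add: W_def sum_verts algebra_simps)
    subgoal using W0[OF k, of 2] by (simp add: W_def sum_verts algebra_simps)
    subgoal using W0[OF k, of 3] by (simp add: W_def sum_verts algebra_simps)
    done
  then have "Z i j = 0" using verts_cases[OF j] i by auto
  then show ?thesis unfolding Z_def by simp
qed

lemma mat_fwd:
  fixes M J B P Q :: "nat \<Rightarrow> nat \<Rightarrow> 'a::field"
  assumes MJ: "\<And>i k. i \<in> verts \<Longrightarrow> k \<in> verts \<Longrightarrow> (\<Sum>j\<in>verts. M i j * J j k) = B i k"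
    and X: "\<And>i j. i \<in> verts \<Longrightarrow> j \<in> verts \<Longrightarrow> (\<Sum>k\<in>verts. \<Sum>l\<in>verts. J i k * P k l * J j l) = Q i j"
    and a: "a \<in> verts" and b: "b \<in> verts"
  shows "(\<Sum>i\<in>verts. \<Sum>j\<in>verts. B a i * P i j * B b j) = (\<Sum>k\<in>verts. \<Sum>l\<in>verts. M a k * Q k l * M b l)"
proof -
  have "(\<Sum>k\<in>verts. \<Sum>l\<in>verts. M a k * Q k l * M b l) =
        (\<Sum>k\<in>verts. \<Sum>l\<in>verts. M a k * (\<Sum>i\<in>verts. \<Sum>j\<in>verts. J k i * P i j * J l j) * M b l)"
    using X by (intro sum.cong refl) simp
  moreover have "(\<Sum>k\<in>verts. \<Sum>l\<in>verts. M a k * (\<Sum>i\<in>verts. \<Sum>j\<in>verts. J k i * P i j * J l j) * M b l)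
       = (\<Sum>i\<in>verts. \<Sum>j\<in>verts. B a i * P i j * B b j)"
    by (rule rearr) (simp_all add: MJ a b)
  ultimately show ?thesis by simp
qed

definition Bx :: "'a::real_normed_field \<Rightarrow> 'a \<Rightarrow> (nat \<Rightarrow> 'a) \<Rightarrow> nat \<Rightarrow> nat \<Rightarrow> 'a" where
  "Bx a b y i k = (if i = k then 1 + (\<Sum>j\<in>verts. graph3 a b i j * y j) else 0) + graph3 a b i k * y i"

lemma polyMJ:
  assumes i: "i \<in> verts" and k: "k \<in> verts"
  shows "(\<Sum>j\<in>verts. Mx a b p i j * (dNp a b p j k * Dp a b p - Np a b p j * dDp a b p k))
    = Dp a b p * Dp a b p * (if i = k then 1 else 0) + Dp a b p * ((if i = k then (\<Sum>j\<in>verts. graph3 a b i j * Np a b p j) else 0) + graph3 a b i k * Np a b p i)"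
  using verts_cases[OF i] verts_cases[OF k]
  apply (elim disjE; hypsubst_thin)
  apply (simp_all add: Mx_def Np_def dNp_def Dp_def dDp_def sum_verts graph3_def)
  apply algebra+
  done

definition Pm :: "'a::real_normed_field \<Rightarrow> 'a \<Rightarrow> (nat \<Rightarrow> 'a) \<Rightarrow> nat \<Rightarrow> nat \<Rightarrow> 'a" where
  "Pm a b p k l = graph3 a b k l * p k * p l"

definition GG :: "'a::real_normed_field \<Rightarrow> 'a \<Rightarrow> (nat \<Rightarrow> 'a) \<Rightarrow> (nat \<Rightarrow> 'a) \<Rightarrow> nat \<Rightarrow> nat \<Rightarrow> 'a" where
  "GG a b p y i j = (\<Sum>k\<in>verts. \<Sum>l\<in>verts. Bx a b y i k * Pm a b p k l * Bx a b y j l)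
       - (\<Sum>k\<in>verts. \<Sum>l\<in>verts. Mx a b p i k * Pm a b y k l * Mx a b p j l)"

definition Gh12 :: "'a::real_normed_field \<Rightarrow> 'a \<Rightarrow> (nat \<Rightarrow> 'a) \<Rightarrow> 'a" where
  "Gh12 a b p = (2*(p 1)^5*(p 2)*(p 3)*a^4 - 2*(p 1)^5*(p 2)*(p 3)*a^3*b - 2*(p 1)^5*(p 2)*(p 3)*a^3 + 2*(p 1)^5*(p 2)*(p 3)*a^2*b + 2*(p 1)^4*(p 2)^2*(p 3)*a^4 - 2*(p 1)^4*(p 2)^2*(p 3)*a^3 - 2*(p 1)^4*(p 2)^2*(p 3)*a^2*b^2 + 2*(p 1)^4*(p 2)^2*(p 3)*a*b^2 - 2*(p 1)^4*(p 2)*(p 3)^2*a^4*b + 2*(p 1)^4*(p 2)*(p 3)^2*a^4 + 2*(p 1)^4*(p 2)*(p 3)^2*a^3*b^2 - 2*(p 1)^4*(p 2)*(p 3)^2*a^3 - 2*(p 1)^4*(p 2)*(p 3)^2*a^2*b^2 + 2*(p 1)^4*(p 2)*(p 3)^2*a^2*b + 2*(p 1)^4*(p 2)*(p 3)*a^4 - 2*(p 1)^4*(p 2)*(p 3)*a^3*b - 2*(p 1)^4*(p 2)*(p 3)*a^2 + 2*(p 1)^4*(p 2)*(p 3)*a*b + 2*(p 1)^3*(p 2)^3*(p 3)*a^3*b - 2*(p 1)^3*(p 2)^3*(p 3)*a*b^3 - 2*(p 1)^3*(p 2)^2*(p 3)^2*a^4*b + 2*(p 1)^3*(p 2)^2*(p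 3)^2*a^3*b^2 + 8*(p 1)^3*(p 2)^2*(p 3)^2*a^3*b - 4*(p 1)^3*(p 2)^2*(p 3)^2*a^2*b^2 - 2*(p 1)^3*(p 2)^2*(p 3)^2*a^2*b - 4*(p 1)^3*(p 2)^2*(p 3)^2*a*b^3 + 2*(p 1)^3*(p 2)^2*(p 3)^2*a*b^2 + 2*(p 1)^3*(p 2)^2*(p 3)*a^3*b + 2*(p 1)^3*(p 2)^2*(p 3)*a^3 - 2*(p 1)^3*(p 2)^2*(p 3)*a^2*b^2 - 4*(p 1)^3*(p 2)^2*(p 3)*a^2*b - 2*(p 1)^3*(p 2)^2*(p 3)*a^2 + 2*(p 1)^3*(p 2)^2*(p 3)*a*b^2 + 2*(p 1)^3*(p 2)^2*(p 3)*a*b + 2*(p 1)^3*(p 2)*(p 3)^3*a^3*b^2 + 2*(p 1)^3*(p 2)*(p 3)^3*a^3*b - 2*(p 1)^3*(p 2)*(p 3)^3*a^2*b^3 - 2*(p 1)^3*(p 2)*(p 3)^3*a^2*b^2 + 2*(p 1)^3*(p 2)*(p 3)^2*a^4 - 8*(p 1)^3*(p 2)*(p 3)^2*a^3*b - 2*(p 1)^3*(p 2)*(p 3)^2*a^3 + 6*(p 1)^3*(p 2)*(p 3)^2*a^2*b^2 + 8*(p 1)^3*(p 2)*(p 3)^2*a^2*b - 6*(p 1)^3*(p 2)*(p 3)^2*a*b^2 + 2*(p 1)^3*(p 2)*(p 3)*a^3 - 2*(p 1)^3*(p 2)*(p 3)*a^2*b - 2*(p 1)^3*(p 2)*(p 3)*a^2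 + 2*(p 1)^3*(p 2)*(p 3)*a*b + 2*(p 1)^2*(p 2)^4*(p 3)*a^2*b^2 + 2*(p 1)^2*(p 2)^4*(p 3)*a^2*b - 2*(p 1)^2*(p 2)^4*(p 3)*b^4 - 2*(p 1)^2*(p 2)^4*(p 3)*b^3 + 4*(p 1)^2*(p 2)^3*(p 3)^2*a^3*b + 2*(p 1)^2*(p 2)^3*(p 3)^2*a^2*b^3 + 4*(p 1)^2*(p 2)^3*(p 3)^2*a^2*b^2 + 2*(p 1)^2*(p 2)^3*(p 3)^2*a^2*b - 2*(p 1)^2*(p 2)^3*(p 3)^2*a*b^4 - 8*(p 1)^2*(p 2)^3*(p 3)^2*a*b^3 - 2*(p 1)^2*(p 2)^3*(p 3)^2*a*b^2 - 2*(p 1)^2*(p 2)^3*(p 3)*a^2*b^2 - 2*(p 1)^2*(p 2)^3*(p 3)*a^2*b + 2*(p 1)^2*(p 2)^3*(p 3)*a*b^3 + 4*(p 1)^2*(p 2)^3*(p 3)*a*b^2 + 2*(p 1)^2*(p 2)^3*(p 3)*a*b - 2*(p 1)^2*(p 2)^3*(p 3)*b^3 - 2*(p 1)^2*(p 2)^3*(p 3)*b^2 + 2*(p 1)^2*(p 2)^2*(p 3)^3*a^4*b - 2*(p 1)^2*(p 2)^2*(p 3)^3*a^3*b^2 + 4*(p 1)^2*(p 2)^2*(p 3)^3*a^3*b - 2*(p 1)^2*(p 2)^2*(p 3)^3*a^2*b^3 + 2*(p 1)^2*(p 2)^2*(p 3)^3*a*b^4 - 4*(p 1)^2*(p 2)^2*(p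 3)^3*a*b^3 - 2*(p 1)^2*(p 2)*(p 3)^4*a^4*b^2 + 2*(p 1)^2*(p 2)*(p 3)^4*a^4*b + 2*(p 1)^2*(p 2)*(p 3)^4*a^2*b^4 - 2*(p 1)^2*(p 2)*(p 3)^4*a^2*b^3 + 2*(p 1)^2*(p 2)*(p 3)^3*a^4*b + 4*(p 1)^2*(p 2)*(p 3)^3*a^3*b^2 - 2*(p 1)^2*(p 2)*(p 3)^3*a^3*b - 6*(p 1)^2*(p 2)*(p 3)^3*a^2*b^3 - 4*(p 1)^2*(p 2)*(p 3)^3*a^2*b^2 + 6*(p 1)^2*(p 2)*(p 3)^3*a*b^3 - 4*(p 1)^2*(p 2)*(p 3)^2*a^3*b + 4*(p 1)^2*(p 2)*(p 3)^2*a^2*b^2 + 4*(p 1)^2*(p 2)*(p 3)^2*a^2*b - 4*(p 1)^2*(p 2)*(p 3)^2*a*b^2 + 2*(p 1)*(p 2)^5*(p 3)*a*b^3 + 2*(p 1)*(p 2)^5*(p 3)*a*b^2 - 2*(p 1)*(p 2)^5*(p 3)*b^4 - 2*(p 1)*(p 2)^5*(p 3)*b^3 + 2*(p 1)*(p 2)^4*(p 3)^2*a^2*b^3 + 2*(p 1)*(p 2)^4*(p 3)^2*a^2*b^2 - 2*(p 1)*(p 2)^4*(p 3)^2*a*b^4 + 2*(p 1)*(p 2)^4*(p 3)^2*a*b^2 - 2*(p 1)*(p 2)^4*(p 3)^2*b^4 - 2*(p 1)*(p 2)^4*(p 3)^2*b^3 - 2*(p 1)*(p 2)^4*(p 3)*a*b^3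 + 2*(p 1)*(p 2)^4*(p 3)*a*b + 2*(p 1)*(p 2)^4*(p 3)*b^4 - 2*(p 1)*(p 2)^4*(p 3)*b^2 - 2*(p 1)*(p 2)^3*(p 3)^3*a^3*b^2 + 2*(p 1)*(p 2)^3*(p 3)^3*a^2*b^3 + 2*(p 1)*(p 2)^3*(p 3)^3*a^2*b^2 - 2*(p 1)*(p 2)^3*(p 3)^3*a*b^3 + 6*(p 1)*(p 2)^3*(p 3)^2*a^2*b^2 + 6*(p 1)*(p 2)^3*(p 3)^2*a^2*b - 8*(p 1)*(p 2)^3*(p 3)^2*a*b^3 - 8*(p 1)*(p 2)^3*(p 3)^2*a*b^2 + 2*(p 1)*(p 2)^3*(p 3)^2*b^4 + 2*(p 1)*(p 2)^3*(p 3)^2*b^3 - 2*(p 1)*(p 2)^3*(p 3)*a*b^2 - 2*(p 1)*(p 2)^3*(p 3)*a*b + 2*(p 1)*(p 2)^3*(p 3)*b^3 + 2*(p 1)*(p 2)^3*(p 3)*b^2 - 2*(p 1)*(p 2)^2*(p 3)^4*a^4*b^2 - 2*(p 1)*(p 2)^2*(p 3)^4*a^3*b^2 + 2*(p 1)*(p 2)^2*(p 3)^4*a^2*b^4 + 2*(p 1)*(p 2)^2*(p 3)^4*a*b^4 + 6*(p 1)*(p 2)^2*(p 3)^3*a^3*b^2 + 6*(p 1)*(p 2)^2*(p 3)^3*a^3*b - 4*(p 1)*(p 2)^2*(p 3)^3*a^2*b^3 - 4*(p 1)*(p 2)^2*(p 3)^3*a^2*b^2 - 2*(p 1)*(p 2)^2*(p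 3)^3*a*b^4 - 2*(p 1)*(p 2)^2*(p 3)^3*a*b^3 - 4*(p 1)*(p 2)^2*(p 3)^2*a^2*b^2 - 4*(p 1)*(p 2)^2*(p 3)^2*a^2*b + 4*(p 1)*(p 2)^2*(p 3)^2*a*b^3 + 4*(p 1)*(p 2)^2*(p 3)^2*a*b^2 - 2*(p 1)*(p 2)*(p 3)^5*a^4*b^2 + 2*(p 1)*(p 2)*(p 3)^5*a^2*b^4 + 2*(p 1)*(p 2)*(p 3)^4*a^4*b + 2*(p 1)*(p 2)*(p 3)^4*a^3*b^2 - 2*(p 1)*(p 2)*(p 3)^4*a^2*b^3 - 2*(p 1)*(p 2)*(p 3)^4*a*b^4 - 2*(p 1)*(p 2)*(p 3)^3*a^3*b + 2*(p 1)*(p 2)*(p 3)^3*a*b^3)"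

definition H5_12 :: "'a::real_normed_field \<Rightarrow> 'a \<Rightarrow> (nat \<Rightarrow> 'a) \<Rightarrow> 'a" where
  "H5_12 a b p = (2*(p 1)^3*(p 2)*(p 3)*a^3 - 2*(p 1)^3*(p 2)*(p 3)*a^2*b - 2*(p 1)^3*(p 2)*(p 3)*a^2 + 2*(p 1)^3*(p 2)*(p 3)*a*b - 4*(p 1)^2*(p 2)*(p 3)^2*a^3*b + 4*(p 1)^2*(p 2)*(p 3)^2*a^2*b^2 + 4*(p 1)^2*(p 2)*(p 3)^2*a^2*b - 4*(p 1)^2*(p 2)*(p 3)^2*a*b^2 - 2*(p 1)*(p 2)^3*(p 3)*a*b^2 - 2*(p 1)*(p 2)^3*(p 3)*a*b + 2*(p 1)*(p 2)^3*(p 3)*b^3 + 2*(p 1)*(p 2)^3*(p 3)*b^2 - 4*(p 1)*(p 2)^2*(p 3)^2*a^2*b^2 - 4*(p 1)*(p 2)^2*(p 3)^2*a^2*b + 4*(p 1)*(p 2)^2*(p 3)^2*a*b^3 + 4*(p 1)*(p 2)^2*(p 3)^2*a*b^2 - 2*(p 1)*(p 2)*(p 3)^3*a^3*b + 2*(p 1)*(p 2)*(p 3)^3*a*b^3)"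

definition H6_12 :: "'a::real_normed_field \<Rightarrow> 'a \<Rightarrow> (nat \<Rightarrow> 'a) \<Rightarrow> 'a" where
  "H6_12 a b p = (2*(p 1)^4*(p 2)*(p 3)*a^4 - 2*(p 1)^4*(p 2)*(p 3)*a^3*b - 2*(p 1)^4*(p 2)*(p 3)*a^2 + 2*(p 1)^4*(p 2)*(p 3)*a*b + 2*(p 1)^3*(p 2)^2*(p 3)*a^3*b + 2*(p 1)^3*(p 2)^2*(p 3)*a^3 - 2*(p 1)^3*(p 2)^2*(p 3)*a^2*b^2 - 4*(p 1)^3*(p 2)^2*(p 3)*a^2*b - 2*(p 1)^3*(p 2)^2*(p 3)*a^2 + 2*(p 1)^3*(p 2)^2*(p 3)*a*b^2 + 2*(p 1)^3*(p 2)^2*(p 3)*a*b + 2*(p 1)^3*(p 2)*(p 3)^2*a^4 - 8*(p 1)^3*(p 2)*(p 3)^2*a^3*b - 2*(p 1)^3*(p 2)*(p 3)^2*a^3 + 6*(p 1)^3*(p 2)*(p 3)^2*a^2*b^2 + 8*(p 1)^3*(p 2)*(p 3)^2*a^2*b - 6*(p 1)^3*(p 2)*(p 3)^2*a*b^2 - 2*(p 1)^2*(p 2)^3*(p 3)*a^2*b^2 - 2*(p 1)^2*(p 2)^3*(p 3)*a^2*b + 2*(p 1)^2*(p 2)^3*(p 3)*a*b^3 + 4*(p 1)^2*(p 2)^3*(p 3)*a*b^2 + 2*(p 1)^2*(p 2)^3*(p 3)*a*b - 2*(p 1)^2*(p 2)^3*(p 3)*b^3 - 2*(p 1)^2*(p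 2)^3*(p 3)*b^2 + 2*(p 1)^2*(p 2)*(p 3)^3*a^4*b + 4*(p 1)^2*(p 2)*(p 3)^3*a^3*b^2 - 2*(p 1)^2*(p 2)*(p 3)^3*a^3*b - 6*(p 1)^2*(p 2)*(p 3)^3*a^2*b^3 - 4*(p 1)^2*(p 2)*(p 3)^3*a^2*b^2 + 6*(p 1)^2*(p 2)*(p 3)^3*a*b^3 - 2*(p 1)*(p 2)^4*(p 3)*a*b^3 + 2*(p 1)*(p 2)^4*(p 3)*a*b + 2*(p 1)*(p 2)^4*(p 3)*b^4 - 2*(p 1)*(p 2)^4*(p 3)*b^2 + 6*(p 1)*(p 2)^3*(p 3)^2*a^2*b^2 + 6*(p 1)*(p 2)^3*(p 3)^2*a^2*b - 8*(p 1)*(p 2)^3*(p 3)^2*a*b^3 - 8*(p 1)*(p 2)^3*(p 3)^2*a*b^2 + 2*(p 1)*(p 2)^3*(p 3)^2*b^4 + 2*(p 1)*(p 2)^3*(p 3)^2*b^3 + 6*(p 1)*(p 2)^2*(p 3)^3*a^3*b^2 + 6*(p 1)*(p 2)^2*(p 3)^3*a^3*b - 4*(p 1)*(p 2)^2*(p 3)^3*a^2*b^3 - 4*(p 1)*(p 2)^2*(p 3)^3*a^2*b^2 - 2*(p 1)*(p 2)^2*(p 3)^3*a*b^4 - 2*(p 1)*(p 2)^2*(p 3)^3*a*b^3 + 2*(p 1)*(p 2)*(p 3)^4*a^4*b + 2*(p 1)*(p 2)*(p 3)^4*a^3*b^2 - 2*(p 1)*(p 2)*(p 3)^4*a^2*b^3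 - 2*(p 1)*(p 2)*(p 3)^4*a*b^4)"

definition H7_12 :: "'a::real_normed_field \<Rightarrow> 'a \<Rightarrow> (nat \<Rightarrow> 'a) \<Rightarrow> 'a" where
  "H7_12 a b p = (2*(p 1)^5*(p 2)*(p 3)*a^4 - 2*(p 1)^5*(p 2)*(p 3)*a^3*b - 2*(p 1)^5*(p 2)*(p 3)*a^3 + 2*(p 1)^5*(p 2)*(p 3)*a^2*b + 2*(p 1)^4*(p 2)^2*(p 3)*a^4 - 2*(p 1)^4*(p 2)^2*(p 3)*a^3 - 2*(p 1)^4*(p 2)^2*(p 3)*a^2*b^2 + 2*(p 1)^4*(p 2)^2*(p 3)*a*b^2 - 2*(p 1)^4*(p 2)*(p 3)^2*a^4*b + 2*(p 1)^4*(p 2)*(p 3)^2*a^4 + 2*(p 1)^4*(p 2)*(p 3)^2*a^3*b^2 - 2*(p 1)^4*(p 2)*(p 3)^2*a^3 - 2*(p 1)^4*(p 2)*(p 3)^2*a^2*b^2 + 2*(p 1)^4*(p 2)*(p 3)^2*a^2*b + 2*(p 1)^3*(p 2)^3*(p 3)*a^3*b - 2*(p 1)^3*(p 2)^3*(p 3)*a*b^3 - 2*(p 1)^3*(p 2)^2*(p 3)^2*a^4*b + 2*(p 1)^3*(p 2)^2*(p 3)^2*a^3*b^2 + 8*(p 1)^3*(p 2)^2*(p 3)^2*a^3*b - 4*(p 1)^3*(p 2)^2*(p 3)^2*a^2*b^2 - 2*(p 1)^3*(p 2)^2*(p 3)^2*a^2*b - 4*(p 1)^3*(p 2)^2*(p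 3)^2*a*b^3 + 2*(p 1)^3*(p 2)^2*(p 3)^2*a*b^2 + 2*(p 1)^3*(p 2)*(p 3)^3*a^3*b^2 + 2*(p 1)^3*(p 2)*(p 3)^3*a^3*b - 2*(p 1)^3*(p 2)*(p 3)^3*a^2*b^3 - 2*(p 1)^3*(p 2)*(p 3)^3*a^2*b^2 + 2*(p 1)^2*(p 2)^4*(p 3)*a^2*b^2 + 2*(p 1)^2*(p 2)^4*(p 3)*a^2*b - 2*(p 1)^2*(p 2)^4*(p 3)*b^4 - 2*(p 1)^2*(p 2)^4*(p 3)*b^3 + 4*(p 1)^2*(p 2)^3*(p 3)^2*a^3*b + 2*(p 1)^2*(p 2)^3*(p 3)^2*a^2*b^3 + 4*(p 1)^2*(p 2)^3*(p 3)^2*a^2*b^2 + 2*(p 1)^2*(p 2)^3*(p 3)^2*a^2*b - 2*(p 1)^2*(p 2)^3*(p 3)^2*a*b^4 - 8*(p 1)^2*(p 2)^3*(p 3)^2*a*b^3 - 2*(p 1)^2*(p 2)^3*(p 3)^2*a*b^2 + 2*(p 1)^2*(p 2)^2*(p 3)^3*a^4*b - 2*(p 1)^2*(p 2)^2*(p 3)^3*a^3*b^2 + 4*(p 1)^2*(p 2)^2*(p 3)^3*a^3*b - 2*(p 1)^2*(p 2)^2*(p 3)^3*a^2*b^3 + 2*(p 1)^2*(p 2)^2*(p 3)^3*a*b^4 - 4*(p 1)^2*(p 2)^2*(p 3)^3*a*b^3 - 2*(p 1)^2*(p 2)*(p 3)^4*a^4*b^2 + 2*(p 1)^2*(p 2)*(p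 3)^4*a^4*b + 2*(p 1)^2*(p 2)*(p 3)^4*a^2*b^4 - 2*(p 1)^2*(p 2)*(p 3)^4*a^2*b^3 + 2*(p 1)*(p 2)^5*(p 3)*a*b^3 + 2*(p 1)*(p 2)^5*(p 3)*a*b^2 - 2*(p 1)*(p 2)^5*(p 3)*b^4 - 2*(p 1)*(p 2)^5*(p 3)*b^3 + 2*(p 1)*(p 2)^4*(p 3)^2*a^2*b^3 + 2*(p 1)*(p 2)^4*(p 3)^2*a^2*b^2 - 2*(p 1)*(p 2)^4*(p 3)^2*a*b^4 + 2*(p 1)*(p 2)^4*(p 3)^2*a*b^2 - 2*(p 1)*(p 2)^4*(p 3)^2*b^4 - 2*(p 1)*(p 2)^4*(p 3)^2*b^3 - 2*(p 1)*(p 2)^3*(p 3)^3*a^3*b^2 + 2*(p 1)*(p 2)^3*(p 3)^3*a^2*b^3 + 2*(p 1)*(p 2)^3*(p 3)^3*a^2*b^2 - 2*(p 1)*(p 2)^3*(p 3)^3*a*b^3 - 2*(p 1)*(p 2)^2*(p 3)^4*a^4*b^2 - 2*(p 1)*(p 2)^2*(p 3)^4*a^3*b^2 + 2*(p 1)*(p 2)^2*(p 3)^4*a^2*b^4 + 2*(p 1)*(p 2)^2*(p 3)^4*a*b^4 - 2*(p 1)*(p 2)*(p 3)^5*a^4*b^2 + 2*(p 1)*(p 2)*(p 3)^5*a^2*b^4)"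

definition Gh13 :: "'a::real_normed_field \<Rightarrow> 'a \<Rightarrow> (nat \<Rightarrow> 'a) \<Rightarrow> 'a" where
  "Gh13 a b p = (- (2*(p 1)^5*(p 2)*(p 3)*a^3*b) - 2*(p 1)^5*(p 2)*(p 3)*a^3 + 2*(p 1)^5*(p 2)*(p 3)*a^2*b + 2*(p 1)^5*(p 2)*(p 3)*a^2 - 2*(p 1)^4*(p 2)^2*(p 3)*a^3*b - 2*(p 1)^4*(p 2)^2*(p 3)*a^3 - 2*(p 1)^4*(p 2)^2*(p 3)*a^2*b^2 + 2*(p 1)^4*(p 2)^2*(p 3)*a^2 + 2*(p 1)^4*(p 2)^2*(p 3)*a*b^2 + 2*(p 1)^4*(p 2)^2*(p 3)*a*b + 2*(p 1)^4*(p 2)*(p 3)^2*a^3*b^2 - 2*(p 1)^4*(p 2)*(p 3)^2*a^3 - 2*(p 1)^4*(p 2)*(p 3)^2*a^2*b^2 + 2*(p 1)^4*(p 2)*(p 3)^2*a^2 - 2*(p 1)^4*(p 2)*(p 3)*a^3*b - 2*(p 1)^4*(p 2)*(p 3)*a^3 + 2*(p 1)^4*(p 2)*(p 3)*a*b + 2*(p 1)^4*(p 2)*(p 3)*a - 2*(p 1)^3*(p 2)^3*(p 3)*a^2*b^2 - 2*(p 1)^3*(p 2)^3*(p 3)*a^2*b + 2*(p 1)^3*(p 2)^3*(p 3)*a*b^3 + 2*(p 1)^3*(p 2)^3*(p 3)*a*b^2 + 2*(p 1)^3*(p 2)^2*(p 3)^2*a^3*b^2 + 2*(p 1)^3*(p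 2)^2*(p 3)^2*a^3*b + 4*(p 1)^3*(p 2)^2*(p 3)^2*a^2*b^3 - 4*(p 1)^3*(p 2)^2*(p 3)^2*a^2*b^2 - 8*(p 1)^3*(p 2)^2*(p 3)^2*a^2*b + 2*(p 1)^3*(p 2)^2*(p 3)^2*a*b^2 + 2*(p 1)^3*(p 2)^2*(p 3)^2*a*b - 6*(p 1)^3*(p 2)^2*(p 3)*a^2*b^2 - 8*(p 1)^3*(p 2)^2*(p 3)*a^2*b - 2*(p 1)^3*(p 2)^2*(p 3)*a^2 + 6*(p 1)^3*(p 2)^2*(p 3)*a*b^2 + 8*(p 1)^3*(p 2)^2*(p 3)*a*b + 2*(p 1)^3*(p 2)^2*(p 3)*a + 2*(p 1)^3*(p 2)*(p 3)^3*a^2*b^3 - 2*(p 1)^3*(p 2)*(p 3)^3*a^2*b - 2*(p 1)^3*(p 2)*(p 3)^2*a^3*b - 2*(p 1)^3*(p 2)*(p 3)^2*a^3 + 2*(p 1)^3*(p 2)*(p 3)^2*a^2*b^2 + 4*(p 1)^3*(p 2)*(p 3)^2*a^2*b + 2*(p 1)^3*(p 2)*(p 3)^2*a^2 - 2*(p 1)^3*(p 2)*(p 3)^2*a*b^2 - 2*(p 1)^3*(p 2)*(p 3)^2*a*b - 2*(p 1)^3*(p 2)*(p 3)*a^2*b - 2*(p 1)^3*(p 2)*(p 3)*a^2 + 2*(p 1)^3*(p 2)*(p 3)*a*b + 2*(p 1)^3*(p 2)*(p 3)*a + 2*(p 1)^2*(p 2)^4*(p 3)*a*b^3 - 2*(p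 1)^2*(p 2)^4*(p 3)*a*b + 2*(p 1)^2*(p 2)^4*(p 3)*b^4 - 2*(p 1)^2*(p 2)^4*(p 3)*b^2 + 4*(p 1)^2*(p 2)^3*(p 3)^2*a^2*b^3 - 4*(p 1)^2*(p 2)^3*(p 3)^2*a^2*b + 2*(p 1)^2*(p 2)^3*(p 3)^2*a*b^4 + 2*(p 1)^2*(p 2)^3*(p 3)^2*a*b^3 - 2*(p 1)^2*(p 2)^3*(p 3)^2*a*b^2 - 2*(p 1)^2*(p 2)^3*(p 3)^2*a*b - 6*(p 1)^2*(p 2)^3*(p 3)*a*b^3 - 4*(p 1)^2*(p 2)^3*(p 3)*a*b^2 + 2*(p 1)^2*(p 2)^3*(p 3)*a*b + 6*(p 1)^2*(p 2)^3*(p 3)*b^3 + 4*(p 1)^2*(p 2)^3*(p 3)*b^2 - 2*(p 1)^2*(p 2)^3*(p 3)*b - 2*(p 1)^2*(p 2)^2*(p 3)^3*a^3*b^2 - 2*(p 1)^2*(p 2)^2*(p 3)^3*a^3*b + 8*(p 1)^2*(p 2)^2*(p 3)^3*a^2*b^3 + 4*(p 1)^2*(p 2)^2*(p 3)^3*a^2*b^2 - 4*(p 1)^2*(p 2)^2*(p 3)^3*a^2*b - 2*(p 1)^2*(p 2)^2*(p 3)^3*a*b^4 - 2*(p 1)^2*(p 2)^2*(p 3)^3*a*b^3 - 4*(p 1)^2*(p 2)^2*(p 3)*a*b^2 - 4*(p 1)^2*(p 2)^2*(p 3)*a*b + 4*(p 1)^2*(p 2)^2*(p 3)*b^2 + 4*(p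 1)^2*(p 2)^2*(p 3)*b + 2*(p 1)^2*(p 2)*(p 3)^4*a^3*b^3 - 2*(p 1)^2*(p 2)*(p 3)^4*a^3*b - 2*(p 1)^2*(p 2)*(p 3)^4*a^2*b^4 + 2*(p 1)^2*(p 2)*(p 3)^4*a^2*b^2 - 2*(p 1)^2*(p 2)*(p 3)^3*a^3*b^2 - 2*(p 1)^2*(p 2)*(p 3)^3*a^3*b + 2*(p 1)^2*(p 2)*(p 3)^3*a^2*b^3 + 4*(p 1)^2*(p 2)*(p 3)^3*a^2*b^2 + 2*(p 1)^2*(p 2)*(p 3)^3*a^2*b - 2*(p 1)^2*(p 2)*(p 3)^3*a*b^3 - 2*(p 1)^2*(p 2)*(p 3)^3*a*b^2 + 2*(p 1)*(p 2)^5*(p 3)*b^4 - 2*(p 1)*(p 2)^5*(p 3)*b^2 + 2*(p 1)*(p 2)^4*(p 3)^2*a*b^4 - 2*(p 1)*(p 2)^4*(p 3)^2*a*b^2 + 2*(p 1)*(p 2)^4*(p 3)^2*b^4 - 2*(p 1)*(p 2)^4*(p 3)^2*b^2 - 2*(p 1)*(p 2)^4*(p 3)*b^4 + 2*(p 1)*(p 2)^4*(p 3)*b^3 + 2*(p 1)*(p 2)^4*(p 3)*b^2 - 2*(p 1)*(p 2)^4*(p 3)*b + 2*(p 1)*(p 2)^3*(p 3)^3*a^2*b^3 + 2*(p 1)*(p 2)^3*(p 3)^3*a^2*b^2 - 2*(p 1)*(p 2)^3*(p 3)^3*a*b^3 - 2*(p 1)*(p 2)^3*(p 3)^3*a*b^2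 + 2*(p 1)*(p 2)^3*(p 3)^2*a*b^3 - 4*(p 1)*(p 2)^3*(p 3)^2*a*b^2 - 6*(p 1)*(p 2)^3*(p 3)^2*a*b - 2*(p 1)*(p 2)^3*(p 3)^2*b^4 + 4*(p 1)*(p 2)^3*(p 3)^2*b^3 + 6*(p 1)*(p 2)^3*(p 3)^2*b^2 - 2*(p 1)*(p 2)^3*(p 3)*b^3 + 2*(p 1)*(p 2)^3*(p 3)*b + 2*(p 1)*(p 2)^2*(p 3)^4*a^3*b^3 + 2*(p 1)*(p 2)^2*(p 3)^4*a^3*b^2 - 2*(p 1)*(p 2)^2*(p 3)^4*a^2*b^4 + 2*(p 1)*(p 2)^2*(p 3)^4*a^2*b^2 - 2*(p 1)*(p 2)^2*(p 3)^4*a*b^4 - 2*(p 1)*(p 2)^2*(p 3)^4*a*b^3 - 2*(p 1)*(p 2)^2*(p 3)^3*a^2*b^3 - 8*(p 1)*(p 2)^2*(p 3)^3*a^2*b^2 - 6*(p 1)*(p 2)^2*(p 3)^3*a^2*b + 2*(p 1)*(p 2)^2*(p 3)^3*a*b^4 + 8*(p 1)*(p 2)^2*(p 3)^3*a*b^3 + 6*(p 1)*(p 2)^2*(p 3)^3*a*b^2 + 4*(p 1)*(p 2)^2*(p 3)^2*a*b^2 + 4*(p 1)*(p 2)^2*(p 3)^2*a*b - 4*(p 1)*(p 2)^2*(p 3)^2*b^3 - 4*(p 1)*(p 2)^2*(p 3)^2*b^2 + 2*(p 1)*(p 2)*(p 3)^5*a^3*b^3 + 2*(p 1)*(p 2)*(p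 3)^5*a^3*b^2 - 2*(p 1)*(p 2)*(p 3)^5*a^2*b^4 - 2*(p 1)*(p 2)*(p 3)^5*a^2*b^3 - 2*(p 1)*(p 2)*(p 3)^4*a^3*b^2 - 2*(p 1)*(p 2)*(p 3)^4*a^3*b + 2*(p 1)*(p 2)*(p 3)^4*a*b^4 + 2*(p 1)*(p 2)*(p 3)^4*a*b^3 + 2*(p 1)*(p 2)*(p 3)^3*a^2*b^2 + 2*(p 1)*(p 2)*(p 3)^3*a^2*b - 2*(p 1)*(p 2)*(p 3)^3*a*b^3 - 2*(p 1)*(p 2)*(p 3)^3*a*b^2)"

definition H5_13 :: "'a::real_normed_field \<Rightarrow> 'a \<Rightarrow> (nat \<Rightarrow> 'a) \<Rightarrow> 'a" where
  "H5_13 a b p = (- (2*(p 1)^3*(p 2)*(p 3)*a^2*b) - 2*(p 1)^3*(p 2)*(p 3)*a^2 + 2*(p 1)^3*(p 2)*(p 3)*a*b + 2*(p 1)^3*(p 2)*(p 3)*a - 4*(p 1)^2*(p 2)^2*(p 3)*a*b^2 - 4*(p 1)^2*(p 2)^2*(p 3)*a*b + 4*(p 1)^2*(p 2)^2*(p 3)*b^2 + 4*(p 1)^2*(p 2)^2*(p 3)*b - 2*(p 1)*(p 2)^3*(p 3)*b^3 + 2*(p 1)*(p 2)^3*(p 3)*b + 4*(p 1)*(p 2)^2*(p 3)^2*a*b^2 + 4*(p 1)*(p 2)^2*(p 3)^2*a*b - 4*(p 1)*(p 2)^2*(p 3)^2*b^3 - 4*(p 1)*(p 2)^2*(p 3)^2*b^2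 + 2*(p 1)*(p 2)*(p 3)^3*a^2*b^2 + 2*(p 1)*(p 2)*(p 3)^3*a^2*b - 2*(p 1)*(p 2)*(p 3)^3*a*b^3 - 2*(p 1)*(p 2)*(p 3)^3*a*b^2)"

definition H6_13 :: "'a::real_normed_field \<Rightarrow> 'a \<Rightarrow> (nat \<Rightarrow> 'a) \<Rightarrow> 'a" where
  "H6_13 a b p = (- (2*(p 1)^4*(p 2)*(p 3)*a^3*b) - 2*(p 1)^4*(p 2)*(p 3)*a^3 + 2*(p 1)^4*(p 2)*(p 3)*a*b + 2*(p 1)^4*(p 2)*(p 3)*a - 6*(p 1)^3*(p 2)^2*(p 3)*a^2*b^2 - 8*(p 1)^3*(p 2)^2*(p 3)*a^2*b - 2*(p 1)^3*(p 2)^2*(p 3)*a^2 + 6*(p 1)^3*(p 2)^2*(p 3)*a*b^2 + 8*(p 1)^3*(p 2)^2*(p 3)*a*b + 2*(p 1)^3*(p 2)^2*(p 3)*a - 2*(p 1)^3*(p 2)*(p 3)^2*a^3*b - 2*(p 1)^3*(p 2)*(p 3)^2*a^3 + 2*(p 1)^3*(p 2)*(p 3)^2*a^2*b^2 + 4*(p 1)^3*(p 2)*(p 3)^2*a^2*b + 2*(p 1)^3*(p 2)*(p 3)^2*a^2 - 2*(p 1)^3*(p 2)*(p 3)^2*a*b^2 - 2*(p 1)^3*(p 2)*(p 3)^2*a*b - 6*(p 1)^2*(p 2)^3*(p 3)*a*b^3 - 4*(p 1)^2*(p 2)^3*(p 3)*a*b^2 + 2*(p 1)^2*(p 2)^3*(p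 3)*a*b + 6*(p 1)^2*(p 2)^3*(p 3)*b^3 + 4*(p 1)^2*(p 2)^3*(p 3)*b^2 - 2*(p 1)^2*(p 2)^3*(p 3)*b - 2*(p 1)^2*(p 2)*(p 3)^3*a^3*b^2 - 2*(p 1)^2*(p 2)*(p 3)^3*a^3*b + 2*(p 1)^2*(p 2)*(p 3)^3*a^2*b^3 + 4*(p 1)^2*(p 2)*(p 3)^3*a^2*b^2 + 2*(p 1)^2*(p 2)*(p 3)^3*a^2*b - 2*(p 1)^2*(p 2)*(p 3)^3*a*b^3 - 2*(p 1)^2*(p 2)*(p 3)^3*a*b^2 - 2*(p 1)*(p 2)^4*(p 3)*b^4 + 2*(p 1)*(p 2)^4*(p 3)*b^3 + 2*(p 1)*(p 2)^4*(p 3)*b^2 - 2*(p 1)*(p 2)^4*(p 3)*b + 2*(p 1)*(p 2)^3*(p 3)^2*a*b^3 - 4*(p 1)*(p 2)^3*(p 3)^2*a*b^2 - 6*(p 1)*(p 2)^3*(p 3)^2*a*b - 2*(p 1)*(p 2)^3*(p 3)^2*b^4 + 4*(p 1)*(p 2)^3*(p 3)^2*b^3 + 6*(p 1)*(p 2)^3*(p 3)^2*b^2 - 2*(p 1)*(p 2)^2*(p 3)^3*a^2*b^3 - 8*(p 1)*(p 2)^2*(p 3)^3*a^2*b^2 - 6*(p 1)*(p 2)^2*(p 3)^3*a^2*b + 2*(p 1)*(p 2)^2*(p 3)^3*a*b^4 + 8*(p 1)*(p 2)^2*(p 3)^3*a*b^3 + 6*(p 1)*(p 2)^2*(p 3)^3*a*b^2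 - 2*(p 1)*(p 2)*(p 3)^4*a^3*b^2 - 2*(p 1)*(p 2)*(p 3)^4*a^3*b + 2*(p 1)*(p 2)*(p 3)^4*a*b^4 + 2*(p 1)*(p 2)*(p 3)^4*a*b^3)"

definition H7_13 :: "'a::real_normed_field \<Rightarrow> 'a \<Rightarrow> (nat \<Rightarrow> 'a) \<Rightarrow> 'a" where
  "H7_13 a b p = (- (2*(p 1)^5*(p 2)*(p 3)*a^3*b) - 2*(p 1)^5*(p 2)*(p 3)*a^3 + 2*(p 1)^5*(p 2)*(p 3)*a^2*b + 2*(p 1)^5*(p 2)*(p 3)*a^2 - 2*(p 1)^4*(p 2)^2*(p 3)*a^3*b - 2*(p 1)^4*(p 2)^2*(p 3)*a^3 - 2*(p 1)^4*(p 2)^2*(p 3)*a^2*b^2 + 2*(p 1)^4*(p 2)^2*(p 3)*a^2 + 2*(p 1)^4*(p 2)^2*(p 3)*a*b^2 + 2*(p 1)^4*(p 2)^2*(p 3)*a*b + 2*(p 1)^4*(p 2)*(p 3)^2*a^3*b^2 - 2*(p 1)^4*(p 2)*(p 3)^2*a^3 - 2*(p 1)^4*(p 2)*(p 3)^2*a^2*b^2 + 2*(p 1)^4*(p 2)*(p 3)^2*a^2 - 2*(p 1)^3*(p 2)^3*(p 3)*a^2*b^2 - 2*(p 1)^3*(p 2)^3*(p 3)*a^2*b + 2*(p 1)^3*(p 2)^3*(p 3)*a*b^3 + 2*(p 1)^3*(p 2)^3*(p 3)*a*b^2 + 2*(p 1)^3*(p 2)^2*(p 3)^2*a^3*b^2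 + 2*(p 1)^3*(p 2)^2*(p 3)^2*a^3*b + 4*(p 1)^3*(p 2)^2*(p 3)^2*a^2*b^3 - 4*(p 1)^3*(p 2)^2*(p 3)^2*a^2*b^2 - 8*(p 1)^3*(p 2)^2*(p 3)^2*a^2*b + 2*(p 1)^3*(p 2)^2*(p 3)^2*a*b^2 + 2*(p 1)^3*(p 2)^2*(p 3)^2*a*b + 2*(p 1)^3*(p 2)*(p 3)^3*a^2*b^3 - 2*(p 1)^3*(p 2)*(p 3)^3*a^2*b + 2*(p 1)^2*(p 2)^4*(p 3)*a*b^3 - 2*(p 1)^2*(p 2)^4*(p 3)*a*b + 2*(p 1)^2*(p 2)^4*(p 3)*b^4 - 2*(p 1)^2*(p 2)^4*(p 3)*b^2 + 4*(p 1)^2*(p 2)^3*(p 3)^2*a^2*b^3 - 4*(p 1)^2*(p 2)^3*(p 3)^2*a^2*b + 2*(p 1)^2*(p 2)^3*(p 3)^2*a*b^4 + 2*(p 1)^2*(p 2)^3*(p 3)^2*a*b^3 - 2*(p 1)^2*(p 2)^3*(p 3)^2*a*b^2 - 2*(p 1)^2*(p 2)^3*(p 3)^2*a*b - 2*(p 1)^2*(p 2)^2*(p 3)^3*a^3*b^2 - 2*(p 1)^2*(p 2)^2*(p 3)^3*a^3*b + 8*(p 1)^2*(p 2)^2*(p 3)^3*a^2*b^3 + 4*(p 1)^2*(p 2)^2*(p 3)^3*a^2*b^2 - 4*(p 1)^2*(p 2)^2*(p 3)^3*a^2*b - 2*(p 1)^2*(p 2)^2*(p 3)^3*a*b^4 -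 2*(p 1)^2*(p 2)^2*(p 3)^3*a*b^3 + 2*(p 1)^2*(p 2)*(p 3)^4*a^3*b^3 - 2*(p 1)^2*(p 2)*(p 3)^4*a^3*b - 2*(p 1)^2*(p 2)*(p 3)^4*a^2*b^4 + 2*(p 1)^2*(p 2)*(p 3)^4*a^2*b^2 + 2*(p 1)*(p 2)^5*(p 3)*b^4 - 2*(p 1)*(p 2)^5*(p 3)*b^2 + 2*(p 1)*(p 2)^4*(p 3)^2*a*b^4 - 2*(p 1)*(p 2)^4*(p 3)^2*a*b^2 + 2*(p 1)*(p 2)^4*(p 3)^2*b^4 - 2*(p 1)*(p 2)^4*(p 3)^2*b^2 + 2*(p 1)*(p 2)^3*(p 3)^3*a^2*b^3 + 2*(p 1)*(p 2)^3*(p 3)^3*a^2*b^2 - 2*(p 1)*(p 2)^3*(p 3)^3*a*b^3 - 2*(p 1)*(p 2)^3*(p 3)^3*a*b^2 + 2*(p 1)*(p 2)^2*(p 3)^4*a^3*b^3 + 2*(p 1)*(p 2)^2*(p 3)^4*a^3*b^2 - 2*(p 1)*(p 2)^2*(p 3)^4*a^2*b^4 + 2*(p 1)*(p 2)^2*(p 3)^4*a^2*b^2 - 2*(p 1)*(p 2)^2*(p 3)^4*a*b^4 - 2*(p 1)*(p 2)^2*(p 3)^4*a*b^3 + 2*(p 1)*(p 2)*(p 3)^5*a^3*b^3 + 2*(p 1)*(p 2)*(p 3)^5*a^3*b^2 - 2*(p 1)*(p 2)*(p 3)^5*a^2*b^4 - 2*(p 1)*(p 2)*(p 3)^5*a^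2*b^3)"

definition Gh23 :: "'a::real_normed_field \<Rightarrow> 'a \<Rightarrow> (nat \<Rightarrow> 'a) \<Rightarrow> 'a" where
  "Gh23 a b p = (2*(p 1)^5*(p 2)*(p 3)*a^4 - 2*(p 1)^5*(p 2)*(p 3)*a^2 + 2*(p 1)^4*(p 2)^2*(p 3)*a^4 + 2*(p 1)^4*(p 2)^2*(p 3)*a^3*b - 2*(p 1)^4*(p 2)^2*(p 3)*a^2 - 2*(p 1)^4*(p 2)^2*(p 3)*a*b - 2*(p 1)^4*(p 2)*(p 3)^2*a^4*b + 2*(p 1)^4*(p 2)*(p 3)^2*a^4 + 2*(p 1)^4*(p 2)*(p 3)^2*a^2*b - 2*(p 1)^4*(p 2)*(p 3)^2*a^2 + 2*(p 1)^4*(p 2)*(p 3)*a^4 + 2*(p 1)^4*(p 2)*(p 3)*a^3 - 2*(p 1)^4*(p 2)*(p 3)*a^2 - 2*(p 1)^4*(p 2)*(p 3)*a + 2*(p 1)^3*(p 2)^3*(p 3)*a^3*b - 2*(p 1)^3*(p 2)^3*(p 3)*a^2*b^2 - 2*(p 1)^3*(p 2)^3*(p 3)*a^2*b + 2*(p 1)^3*(p 2)^3*(p 3)*a*b^2 - 2*(p 1)^3*(p 2)^2*(p 3)^2*a^4*b - 4*(p 1)^3*(p 2)^2*(p 3)^2*a^3*b^2 + 2*(p 1)^3*(p 2)^2*(p 3)^2*a^3*b + 2*(p 1)^3*(p 2)^2*(p 3)^2*a^2*b + 4*(p 1)^3*(p 2)^2*(p 3)^2*a*b^2 - 2*(p 1)^3*(p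 2)^2*(p 3)^2*a*b + 6*(p 1)^3*(p 2)^2*(p 3)*a^3*b + 6*(p 1)^3*(p 2)^2*(p 3)*a^3 - 4*(p 1)^3*(p 2)^2*(p 3)*a^2*b - 4*(p 1)^3*(p 2)^2*(p 3)*a^2 - 2*(p 1)^3*(p 2)^2*(p 3)*a*b - 2*(p 1)^3*(p 2)^2*(p 3)*a - 2*(p 1)^3*(p 2)*(p 3)^3*a^3*b^2 - 2*(p 1)^3*(p 2)*(p 3)^3*a^3*b + 2*(p 1)^3*(p 2)*(p 3)^3*a^2*b^2 + 2*(p 1)^3*(p 2)*(p 3)^3*a^2*b + 2*(p 1)^3*(p 2)*(p 3)^2*a^4 - 2*(p 1)^3*(p 2)*(p 3)^2*a^3*b + 4*(p 1)^3*(p 2)*(p 3)^2*a^3 - 4*(p 1)^3*(p 2)*(p 3)^2*a^2*b - 6*(p 1)^3*(p 2)*(p 3)^2*a^2 + 6*(p 1)^3*(p 2)*(p 3)^2*a*b + 2*(p 1)^3*(p 2)*(p 3)*a^3 - 2*(p 1)^3*(p 2)*(p 3)*a - 2*(p 1)^2*(p 2)^4*(p 3)*a^2*b^2 - 2*(p 1)^2*(p 2)^4*(p 3)*a^2*b - 2*(p 1)^2*(p 2)^4*(p 3)*a*b^3 + 2*(p 1)^2*(p 2)^4*(p 3)*a*b + 2*(p 1)^2*(p 2)^4*(p 3)*b^3 + 2*(p 1)^2*(p 2)^4*(p 3)*b^2 - 4*(p 1)^2*(p 2)^3*(p 3)^2*a^3*b^2 - 2*(p 1)^2*(p 2)^3*(p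 3)^2*a^2*b^3 - 4*(p 1)^2*(p 2)^3*(p 3)^2*a^2*b^2 - 2*(p 1)^2*(p 2)^3*(p 3)^2*a^2*b + 2*(p 1)^2*(p 2)^3*(p 3)^2*a*b^3 + 8*(p 1)^2*(p 2)^3*(p 3)^2*a*b^2 + 2*(p 1)^2*(p 2)^3*(p 3)^2*a*b + 6*(p 1)^2*(p 2)^3*(p 3)*a^2*b^2 + 6*(p 1)^2*(p 2)^3*(p 3)*a^2*b - 8*(p 1)^2*(p 2)^3*(p 3)*a*b^2 - 8*(p 1)^2*(p 2)^3*(p 3)*a*b + 2*(p 1)^2*(p 2)^3*(p 3)*b^2 + 2*(p 1)^2*(p 2)^3*(p 3)*b + 2*(p 1)^2*(p 2)^2*(p 3)^3*a^4*b - 8*(p 1)^2*(p 2)^2*(p 3)^3*a^3*b^2 - 2*(p 1)^2*(p 2)^2*(p 3)^3*a^3*b + 2*(p 1)^2*(p 2)^2*(p 3)^3*a^2*b^3 + 4*(p 1)^2*(p 2)^2*(p 3)^3*a^2*b^2 - 2*(p 1)^2*(p 2)^2*(p 3)^3*a*b^3 + 4*(p 1)^2*(p 2)^2*(p 3)^3*a*b^2 + 4*(p 1)^2*(p 2)^2*(p 3)*a^2*b + 4*(p 1)^2*(p 2)^2*(p 3)*a^2 - 4*(p 1)^2*(p 2)^2*(p 3)*a*b - 4*(p 1)^2*(p 2)^2*(p 3)*a - 2*(p 1)^2*(p 2)*(p 3)^4*a^4*b^2 + 2*(p 1)^2*(p 2)*(p 3)^4*a^4*b + 2*(p 1)^2*(p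 2)*(p 3)^4*a^3*b^3 - 2*(p 1)^2*(p 2)*(p 3)^4*a^3*b - 2*(p 1)^2*(p 2)*(p 3)^4*a^2*b^3 + 2*(p 1)^2*(p 2)*(p 3)^4*a^2*b^2 + 2*(p 1)^2*(p 2)*(p 3)^3*a^4*b - 2*(p 1)^2*(p 2)*(p 3)^3*a^3*b^2 - 8*(p 1)^2*(p 2)*(p 3)^3*a^3*b + 8*(p 1)^2*(p 2)*(p 3)^3*a^2*b^2 + 6*(p 1)^2*(p 2)*(p 3)^3*a^2*b - 6*(p 1)^2*(p 2)*(p 3)^3*a*b^2 + 4*(p 1)^2*(p 2)*(p 3)^2*a^3 - 4*(p 1)^2*(p 2)*(p 3)^2*a^2*b - 4*(p 1)^2*(p 2)*(p 3)^2*a^2 + 4*(p 1)^2*(p 2)*(p 3)^2*a*b - 2*(p 1)*(p 2)^5*(p 3)*a*b^3 - 2*(p 1)*(p 2)^5*(p 3)*a*b^2 + 2*(p 1)*(p 2)^5*(p 3)*b^3 + 2*(p 1)*(p 2)^5*(p 3)*b^2 - 2*(p 1)*(p 2)^4*(p 3)^2*a^2*b^3 - 2*(p 1)*(p 2)^4*(p 3)^2*a^2*b^2 + 2*(p 1)*(p 2)^4*(p 3)^2*b^3 + 2*(p 1)*(p 2)^4*(p 3)^2*b^2 + 2*(p 1)*(p 2)^4*(p 3)*a*b^3 - 2*(p 1)*(p 2)^4*(p 3)*a*b - 2*(p 1)*(p 2)^4*(p 3)*b^3 + 2*(p 1)*(p 2)^4*(p 3)*b - 2*(p 1)*(p 2)^3*(p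 3)^3*a^3*b^2 + 2*(p 1)*(p 2)^3*(p 3)^3*a*b^2 - 2*(p 1)*(p 2)^3*(p 3)^2*a^2*b^2 - 2*(p 1)*(p 2)^3*(p 3)^2*a^2*b + 2*(p 1)*(p 2)^3*(p 3)^2*a*b^3 + 4*(p 1)*(p 2)^3*(p 3)^2*a*b^2 + 2*(p 1)*(p 2)^3*(p 3)^2*a*b - 2*(p 1)*(p 2)^3*(p 3)^2*b^3 - 2*(p 1)*(p 2)^3*(p 3)^2*b^2 + 2*(p 1)*(p 2)^3*(p 3)*a*b^2 + 2*(p 1)*(p 2)^3*(p 3)*a*b - 2*(p 1)*(p 2)^3*(p 3)*b^2 - 2*(p 1)*(p 2)^3*(p 3)*b - 2*(p 1)*(p 2)^2*(p 3)^4*a^4*b^2 + 2*(p 1)*(p 2)^2*(p 3)^4*a^3*b^3 + 2*(p 1)*(p 2)^2*(p 3)^4*a^2*b^2 - 2*(p 1)*(p 2)^2*(p 3)^4*a*b^3 + 2*(p 1)*(p 2)^2*(p 3)^3*a^3*b^2 + 2*(p 1)*(p 2)^2*(p 3)^3*a^3*b - 2*(p 1)*(p 2)^2*(p 3)^3*a^2*b^3 - 4*(p 1)*(p 2)^2*(p 3)^3*a^2*b^2 - 2*(p 1)*(p 2)^2*(p 3)^3*a^2*b + 2*(p 1)*(p 2)^2*(p 3)^3*a*b^3 + 2*(p 1)*(p 2)^2*(p 3)^3*a*b^2 - 2*(p 1)*(p 2)*(p 3)^5*a^4*b^2 + 2*(p 1)*(p 2)*(p 3)^5*a^3*b^3 +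 2*(p 1)*(p 2)*(p 3)^5*a^3*b^2 - 2*(p 1)*(p 2)*(p 3)^5*a^2*b^3 + 2*(p 1)*(p 2)*(p 3)^4*a^4*b - 2*(p 1)*(p 2)*(p 3)^4*a^3*b - 2*(p 1)*(p 2)*(p 3)^4*a^2*b^3 + 2*(p 1)*(p 2)*(p 3)^4*a*b^3 - 2*(p 1)*(p 2)*(p 3)^3*a^3*b + 2*(p 1)*(p 2)*(p 3)^3*a^2*b^2 + 2*(p 1)*(p 2)*(p 3)^3*a^2*b - 2*(p 1)*(p 2)*(p 3)^3*a*b^2)"

definition H5_23 :: "'a::real_normed_field \<Rightarrow> 'a \<Rightarrow> (nat \<Rightarrow> 'a) \<Rightarrow> 'a" where
  "H5_23 a b p = (2*(p 1)^3*(p 2)*(p 3)*a^3 - 2*(p 1)^3*(p 2)*(p 3)*a + 4*(p 1)^2*(p 2)^2*(p 3)*a^2*b + 4*(p 1)^2*(p 2)^2*(p 3)*a^2 - 4*(p 1)^2*(p 2)^2*(p 3)*a*b - 4*(p 1)^2*(p 2)^2*(p 3)*a + 4*(p 1)^2*(p 2)*(p 3)^2*a^3 - 4*(p 1)^2*(p 2)*(p 3)^2*a^2*b - 4*(p 1)^2*(p 2)*(p 3)^2*a^2 + 4*(p 1)^2*(p 2)*(p 3)^2*a*b + 2*(p 1)*(p 2)^3*(p 3)*a*b^2 + 2*(p 1)*(p 2)^3*(p 3)*a*b - 2*(p 1)*(p 2)^3*(p 3)*b^2 - 2*(p 1)*(p 2)^3*(p 3)*b - 2*(p 1)*(p 2)*(p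 3)^3*a^3*b + 2*(p 1)*(p 2)*(p 3)^3*a^2*b^2 + 2*(p 1)*(p 2)*(p 3)^3*a^2*b - 2*(p 1)*(p 2)*(p 3)^3*a*b^2)"

definition H6_23 :: "'a::real_normed_field \<Rightarrow> 'a \<Rightarrow> (nat \<Rightarrow> 'a) \<Rightarrow> 'a" where
  "H6_23 a b p = (2*(p 1)^4*(p 2)*(p 3)*a^4 + 2*(p 1)^4*(p 2)*(p 3)*a^3 - 2*(p 1)^4*(p 2)*(p 3)*a^2 - 2*(p 1)^4*(p 2)*(p 3)*a + 6*(p 1)^3*(p 2)^2*(p 3)*a^3*b + 6*(p 1)^3*(p 2)^2*(p 3)*a^3 - 4*(p 1)^3*(p 2)^2*(p 3)*a^2*b - 4*(p 1)^3*(p 2)^2*(p 3)*a^2 - 2*(p 1)^3*(p 2)^2*(p 3)*a*b - 2*(p 1)^3*(p 2)^2*(p 3)*a + 2*(p 1)^3*(p 2)*(p 3)^2*a^4 - 2*(p 1)^3*(p 2)*(p 3)^2*a^3*b + 4*(p 1)^3*(p 2)*(p 3)^2*a^3 - 4*(p 1)^3*(p 2)*(p 3)^2*a^2*b - 6*(p 1)^3*(p 2)*(p 3)^2*a^2 + 6*(p 1)^3*(p 2)*(p 3)^2*a*b + 6*(p 1)^2*(p 2)^3*(p 3)*a^2*b^2 + 6*(p 1)^2*(p 2)^3*(p 3)*a^2*b - 8*(p 1)^2*(p 2)^3*(p 3)*a*b^2 - 8*(p 1)^2*(p 2)^3*(p 3)*a*b + 2*(p 1)^2*(p 2)^3*(p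 3)*b^2 + 2*(p 1)^2*(p 2)^3*(p 3)*b + 2*(p 1)^2*(p 2)*(p 3)^3*a^4*b - 2*(p 1)^2*(p 2)*(p 3)^3*a^3*b^2 - 8*(p 1)^2*(p 2)*(p 3)^3*a^3*b + 8*(p 1)^2*(p 2)*(p 3)^3*a^2*b^2 + 6*(p 1)^2*(p 2)*(p 3)^3*a^2*b - 6*(p 1)^2*(p 2)*(p 3)^3*a*b^2 + 2*(p 1)*(p 2)^4*(p 3)*a*b^3 - 2*(p 1)*(p 2)^4*(p 3)*a*b - 2*(p 1)*(p 2)^4*(p 3)*b^3 + 2*(p 1)*(p 2)^4*(p 3)*b - 2*(p 1)*(p 2)^3*(p 3)^2*a^2*b^2 - 2*(p 1)*(p 2)^3*(p 3)^2*a^2*b + 2*(p 1)*(p 2)^3*(p 3)^2*a*b^3 + 4*(p 1)*(p 2)^3*(p 3)^2*a*b^2 + 2*(p 1)*(p 2)^3*(p 3)^2*a*b - 2*(p 1)*(p 2)^3*(p 3)^2*b^3 - 2*(p 1)*(p 2)^3*(p 3)^2*b^2 + 2*(p 1)*(p 2)^2*(p 3)^3*a^3*b^2 + 2*(p 1)*(p 2)^2*(p 3)^3*a^3*b - 2*(p 1)*(p 2)^2*(p 3)^3*a^2*b^3 - 4*(p 1)*(p 2)^2*(p 3)^3*a^2*b^2 - 2*(p 1)*(p 2)^2*(p 3)^3*a^2*b + 2*(p 1)*(p 2)^2*(p 3)^3*a*b^3 + 2*(p 1)*(p 2)^2*(p 3)^3*a*b^2 + 2*(p 1)*(p 2)*(p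 3)^4*a^4*b - 2*(p 1)*(p 2)*(p 3)^4*a^3*b - 2*(p 1)*(p 2)*(p 3)^4*a^2*b^3 + 2*(p 1)*(p 2)*(p 3)^4*a*b^3)"

definition H7_23 :: "'a::real_normed_field \<Rightarrow> 'a \<Rightarrow> (nat \<Rightarrow> 'a) \<Rightarrow> 'a" where
  "H7_23 a b p = (2*(p 1)^5*(p 2)*(p 3)*a^4 - 2*(p 1)^5*(p 2)*(p 3)*a^2 + 2*(p 1)^4*(p 2)^2*(p 3)*a^4 + 2*(p 1)^4*(p 2)^2*(p 3)*a^3*b - 2*(p 1)^4*(p 2)^2*(p 3)*a^2 - 2*(p 1)^4*(p 2)^2*(p 3)*a*b - 2*(p 1)^4*(p 2)*(p 3)^2*a^4*b + 2*(p 1)^4*(p 2)*(p 3)^2*a^4 + 2*(p 1)^4*(p 2)*(p 3)^2*a^2*b - 2*(p 1)^4*(p 2)*(p 3)^2*a^2 + 2*(p 1)^3*(p 2)^3*(p 3)*a^3*b - 2*(p 1)^3*(p 2)^3*(p 3)*a^2*b^2 - 2*(p 1)^3*(p 2)^3*(p 3)*a^2*b + 2*(p 1)^3*(p 2)^3*(p 3)*a*b^2 - 2*(p 1)^3*(p 2)^2*(p 3)^2*a^4*b - 4*(p 1)^3*(p 2)^2*(p 3)^2*a^3*b^2 + 2*(p 1)^3*(p 2)^2*(p 3)^2*a^3*b + 2*(p 1)^3*(p 2)^2*(p 3)^2*a^2*b + 4*(p 1)^3*(p 2)^2*(p 3)^2*a*b^2 - 2*(p 1)^3*(p 2)^2*(p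 3)^2*a*b - 2*(p 1)^3*(p 2)*(p 3)^3*a^3*b^2 - 2*(p 1)^3*(p 2)*(p 3)^3*a^3*b + 2*(p 1)^3*(p 2)*(p 3)^3*a^2*b^2 + 2*(p 1)^3*(p 2)*(p 3)^3*a^2*b - 2*(p 1)^2*(p 2)^4*(p 3)*a^2*b^2 - 2*(p 1)^2*(p 2)^4*(p 3)*a^2*b - 2*(p 1)^2*(p 2)^4*(p 3)*a*b^3 + 2*(p 1)^2*(p 2)^4*(p 3)*a*b + 2*(p 1)^2*(p 2)^4*(p 3)*b^3 + 2*(p 1)^2*(p 2)^4*(p 3)*b^2 - 4*(p 1)^2*(p 2)^3*(p 3)^2*a^3*b^2 - 2*(p 1)^2*(p 2)^3*(p 3)^2*a^2*b^3 - 4*(p 1)^2*(p 2)^3*(p 3)^2*a^2*b^2 - 2*(p 1)^2*(p 2)^3*(p 3)^2*a^2*b + 2*(p 1)^2*(p 2)^3*(p 3)^2*a*b^3 + 8*(p 1)^2*(p 2)^3*(p 3)^2*a*b^2 + 2*(p 1)^2*(p 2)^3*(p 3)^2*a*b + 2*(p 1)^2*(p 2)^2*(p 3)^3*a^4*b - 8*(p 1)^2*(p 2)^2*(p 3)^3*a^3*b^2 - 2*(p 1)^2*(p 2)^2*(p 3)^3*a^3*b + 2*(p 1)^2*(p 2)^2*(p 3)^3*a^2*b^3 + 4*(p 1)^2*(p 2)^2*(p 3)^3*a^2*b^2 - 2*(p 1)^2*(p 2)^2*(p 3)^3*a*b^3 + 4*(p 1)^2*(p 2)^2*(p 3)^3*a*b^2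 - 2*(p 1)^2*(p 2)*(p 3)^4*a^4*b^2 + 2*(p 1)^2*(p 2)*(p 3)^4*a^4*b + 2*(p 1)^2*(p 2)*(p 3)^4*a^3*b^3 - 2*(p 1)^2*(p 2)*(p 3)^4*a^3*b - 2*(p 1)^2*(p 2)*(p 3)^4*a^2*b^3 + 2*(p 1)^2*(p 2)*(p 3)^4*a^2*b^2 - 2*(p 1)*(p 2)^5*(p 3)*a*b^3 - 2*(p 1)*(p 2)^5*(p 3)*a*b^2 + 2*(p 1)*(p 2)^5*(p 3)*b^3 + 2*(p 1)*(p 2)^5*(p 3)*b^2 - 2*(p 1)*(p 2)^4*(p 3)^2*a^2*b^3 - 2*(p 1)*(p 2)^4*(p 3)^2*a^2*b^2 + 2*(p 1)*(p 2)^4*(p 3)^2*b^3 + 2*(p 1)*(p 2)^4*(p 3)^2*b^2 - 2*(p 1)*(p 2)^3*(p 3)^3*a^3*b^2 + 2*(p 1)*(p 2)^3*(p 3)^3*a*b^2 - 2*(p 1)*(p 2)^2*(p 3)^4*a^4*b^2 + 2*(p 1)*(p 2)^2*(p 3)^4*a^3*b^3 + 2*(p 1)*(p 2)^2*(p 3)^4*a^2*b^2 - 2*(p 1)*(p 2)^2*(p 3)^4*a*b^3 - 2*(p 1)*(p 2)*(p 3)^5*a^4*b^2 + 2*(p 1)*(p 2)*(p 3)^5*a^3*b^3 + 2*(p 1)*(p 2)*(p 3)^5*a^3*b^2 - 2*(p 1)*(p 2)*(p 3)^5*a^2*b^3)"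

definition Gp12 :: "'a::real_normed_field \<Rightarrow> 'a \<Rightarrow> (nat \<Rightarrow> 'a) \<Rightarrow> (nat \<Rightarrow> 'a) \<Rightarrow> 'a" where
  "Gp12 a b p y = (- ((p 1)^2*(y 2)*(y 3)*a*b) - (p 1)*(p 2)*(y 1)*(y 3)*a^2 - (p 1)*(p 2)*(y 1)*(y 3)*a - (p 1)*(p 2)*(y 1) - (p 1)*(p 2)*(y 2)*(y 3)*b^2 + (p 1)*(p 2)*(y 2)*(y 3)*b + (p 1)*(p 2)*(y 2) + (p 1)*(p 2)*(y 3)^2*a*b + (p 1)*(p 2)*(y 3)*a + (p 1)*(p 2)*(y 3)*b + (p 1)*(p 2) + (p 1)*(p 3)*(y 1)*(y 2)*a^2 + (p 1)*(p 3)*(y 1)*(y 2)*a + (p 1)*(p 3)*(y 2)^2*a*b + (p 1)*(p 3)*(y 2)*(y 3)*a^2*b + (p 1)*(p 3)*(y 2)*(y 3)*a*b^2 + (p 1)*(p 3)*(y 2)*a*b - (p 1)*(y 1)*(y 2) - (p 1)*(y 2)*(y 3)*a*b - (p 2)^2*(y 1)*(y 3)*a*b + (p 2)*(p 3)*(y 1)^2*a*b + (p 2)*(p 3)*(y 1)*(y 2)*b^2 - (p 2)*(p 3)*(y 1)*(y 2)*b - (p 2)*(p 3)*(y 1)*(y 3)*a^2*b - (p 2)*(p 3)*(y 1)*(y 3)*a*b^2 - (p 2)*(p 3)*(y 1)*a*b + (p 2)*(y 1)*(y 2) + (p 2)*(y 1)*(y 3)*a*b - (p 3)^2*(y 1)*(y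 2)*a*b + (p 3)*(y 1)*(y 2)*a + (p 3)*(y 1)*(y 2)*b - (y 1)*(y 2))"

definition Gq12 :: "'a::real_normed_field \<Rightarrow> 'a \<Rightarrow> (nat \<Rightarrow> 'a) \<Rightarrow> (nat \<Rightarrow> 'a) \<Rightarrow> 'a \<Rightarrow> 'a" where
  "Gq12 a b p n d = (- ((p 1)^2*(n 2)*(n 3)*a*b) - (p 1)*(p 2)*(n 1)*(n 3)*a^2 - (p 1)*(p 2)*(n 1)*(n 3)*a - (p 1)*(p 2)*(n 1)*d - (p 1)*(p 2)*(n 2)*(n 3)*b^2 + (p 1)*(p 2)*(n 2)*(n 3)*b + (p 1)*(p 2)*(n 2)*d + (p 1)*(p 2)*(n 3)^2*a*b + (p 1)*(p 2)*(n 3)*a*d + (p 1)*(p 2)*(n 3)*b*d + (p 1)*(p 2)*d^2 + (p 1)*(p 3)*(n 1)*(n 2)*a^2 + (p 1)*(p 3)*(n 1)*(n 2)*a + (p 1)*(p 3)*(n 2)^2*a*b + (p 1)*(p 3)*(n 2)*(n 3)*a^2*b + (p 1)*(p 3)*(n 2)*(n 3)*a*b^2 + (p 1)*(p 3)*(n 2)*a*b*d - (p 1)*(n 1)*(n 2) - (p 1)*(n 2)*(n 3)*a*b - (p 2)^2*(n 1)*(n 3)*a*b + (p 2)*(p 3)*(n 1)^2*a*b + (p 2)*(p 3)*(n 1)*(n 2)*b^2 - (p 2)*(p 3)*(n 1)*(n 2)*b - (p 2)*(p 3)*(n 1)*(n 3)*a^2*b - (p 2)*(p 3)*(n 1)*(n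 3)*a*b^2 - (p 2)*(p 3)*(n 1)*a*b*d + (p 2)*(n 1)*(n 2) + (p 2)*(n 1)*(n 3)*a*b - (p 3)^2*(n 1)*(n 2)*a*b + (p 3)*(n 1)*(n 2)*a + (p 3)*(n 1)*(n 2)*b - (n 1)*(n 2))"

definition Gp13 :: "'a::real_normed_field \<Rightarrow> 'a \<Rightarrow> (nat \<Rightarrow> 'a) \<Rightarrow> (nat \<Rightarrow> 'a) \<Rightarrow> 'a" where
  "Gp13 a b p y = ((p 1)^2*(y 2)*(y 3)*a*b + (p 1)*(p 2)*(y 1)*(y 3)*a^2 + (p 1)*(p 2)*(y 1)*(y 3)*a + (p 1)*(p 2)*(y 2)*(y 3)*b^2 - (p 1)*(p 2)*(y 2)*(y 3)*b - (p 1)*(p 2)*(y 3)^2*a*b - (p 1)*(p 2)*(y 3)*b - (p 1)*(p 3)*(y 1)*(y 2)*a^2 - (p 1)*(p 3)*(y 1)*(y 2)*a - (p 1)*(p 3)*(y 1)*a^2 - (p 1)*(p 3)*(y 2)^2*a*b - (p 1)*(p 3)*(y 2)*(y 3)*a^2*b - (p 1)*(p 3)*(y 2)*(y 3)*a*b^2 - (p 1)*(p 3)*(y 2)*a*b + (p 1)*(p 3)*(y 2)*a + (p 1)*(p 3)*(y 3)*a^2 + (p 1)*(p 3)*a - (p 1)*(y 1)*(y 3)*a^2 + (p 1)*(y 2)*(y 3)*b + (p 2)^2*(y 1)*(y 3)*a*b - (p 2)*(p 3)*(y 1)^2*a*b - (p 2)*(p 3)*(y 1)*(y 2)*b^2 +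 (p 2)*(p 3)*(y 1)*(y 2)*b + (p 2)*(p 3)*(y 1)*(y 3)*a^2*b + (p 2)*(p 3)*(y 1)*(y 3)*a*b^2 + (p 2)*(p 3)*(y 1)*b - (p 2)*(y 1)*(y 3)*a*b + (p 2)*(y 1)*(y 3)*a + (p 3)^2*(y 1)*(y 2)*a*b - (p 3)*(y 1)*(y 2)*b + (p 3)*(y 1)*(y 3)*a^2 - (y 1)*(y 3)*a)"

definition Gq13 :: "'a::real_normed_field \<Rightarrow> 'a \<Rightarrow> (nat \<Rightarrow> 'a) \<Rightarrow> (nat \<Rightarrow> 'a) \<Rightarrow> 'a \<Rightarrow> 'a" where
  "Gq13 a b p n d = ((p 1)^2*(n 2)*(n 3)*a*b + (p 1)*(p 2)*(n 1)*(n 3)*a^2 + (p 1)*(p 2)*(n 1)*(n 3)*a + (p 1)*(p 2)*(n 2)*(n 3)*b^2 - (p 1)*(p 2)*(n 2)*(n 3)*b - (p 1)*(p 2)*(n 3)^2*a*b - (p 1)*(p 2)*(n 3)*b*d - (p 1)*(p 3)*(n 1)*(n 2)*a^2 - (p 1)*(p 3)*(n 1)*(n 2)*a - (p 1)*(p 3)*(n 1)*a^2*d - (p 1)*(p 3)*(n 2)^2*a*b - (p 1)*(p 3)*(n 2)*(n 3)*a^2*b - (p 1)*(p 3)*(n 2)*(n 3)*a*b^2 - (p 1)*(p 3)*(n 2)*a*b*d + (p 1)*(p 3)*(n 2)*a*d + (p 1)*(p 3)*(n 3)*a^2*d + (p 1)*(p 3)*a*d^2 - (p 1)*(n 1)*(n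 3)*a^2 + (p 1)*(n 2)*(n 3)*b + (p 2)^2*(n 1)*(n 3)*a*b - (p 2)*(p 3)*(n 1)^2*a*b - (p 2)*(p 3)*(n 1)*(n 2)*b^2 + (p 2)*(p 3)*(n 1)*(n 2)*b + (p 2)*(p 3)*(n 1)*(n 3)*a^2*b + (p 2)*(p 3)*(n 1)*(n 3)*a*b^2 + (p 2)*(p 3)*(n 1)*b*d - (p 2)*(n 1)*(n 3)*a*b + (p 2)*(n 1)*(n 3)*a + (p 3)^2*(n 1)*(n 2)*a*b - (p 3)*(n 1)*(n 2)*b + (p 3)*(n 1)*(n 3)*a^2 - (n 1)*(n 3)*a)"

definition Gp23 :: "'a::real_normed_field \<Rightarrow> 'a \<Rightarrow> (nat \<Rightarrow> 'a) \<Rightarrow> (nat \<Rightarrow> 'a) \<Rightarrow> 'a" where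
  "Gp23 a b p y = (- ((p 1)^2*(y 2)*(y 3)*a*b) - (p 1)*(p 2)*(y 1)*(y 3)*a^2 - (p 1)*(p 2)*(y 1)*(y 3)*a - (p 1)*(p 2)*(y 2)*(y 3)*b^2 + (p 1)*(p 2)*(y 2)*(y 3)*b + (p 1)*(p 2)*(y 3)^2*a*b + (p 1)*(p 2)*(y 3)*a + (p 1)*(p 3)*(y 1)*(y 2)*a^2 + (p 1)*(p 3)*(y 1)*(y 2)*a + (p 1)*(p 3)*(y 2)^2*a*b + (p 1)*(p 3)*(y 2)*(y 3)*a^2*b + (p 1)*(p 3)*(y 2)*(y 3)*a*b^2 - (p 1)*(p 3)*(y 2)*a - (p 1)*(y 2)*(y 3)*a*b - (p 1)*(y 2)*(y 3)*b - (p 2)^2*(y 1)*(y 3)*a*b + (p 2)*(p 3)*(y 1)^2*a*b + (p 2)*(p 3)*(y 1)*(y 2)*b^2 - (p 2)*(p 3)*(y 1)*(y 2)*b - (p 2)*(p 3)*(y 1)*(y 3)*a^2*b - (p 2)*(p 3)*(y 1)*(y 3)*a*b^2 - (p 2)*(p 3)*(y 1)*a*b - (p 2)*(p 3)*(y 1)*b - (p 2)*(p 3)*(y 2)*b^2 + (p 2)*(p 3)*(y 3)*b^2 + (p 2)*(p 3)*b - (p 2)*(y 1)*(y 3)*a - (p 2)*(y 2)*(y 3)*b^2 - (p 3)^2*(y 1)*(y 2)*a*b + (p 3)*(y 1)*(y 2)*a + (p 3)*(y 2)*(y 3)*b^2 - (y 2)*(y 3)*b)"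

definition Gq23 :: "'a::real_normed_field \<Rightarrow> 'a \<Rightarrow> (nat \<Rightarrow> 'a) \<Rightarrow> (nat \<Rightarrow> 'a) \<Rightarrow> 'a \<Rightarrow> 'a" where
  "Gq23 a b p n d = (- ((p 1)^2*(n 2)*(n 3)*a*b) - (p 1)*(p 2)*(n 1)*(n 3)*a^2 - (p 1)*(p 2)*(n 1)*(n 3)*a - (p 1)*(p 2)*(n 2)*(n 3)*b^2 + (p 1)*(p 2)*(n 2)*(n 3)*b + (p 1)*(p 2)*(n 3)^2*a*b + (p 1)*(p 2)*(n 3)*a*d + (p 1)*(p 3)*(n 1)*(n 2)*a^2 + (p 1)*(p 3)*(n 1)*(n 2)*a + (p 1)*(p 3)*(n 2)^2*a*b + (p 1)*(p 3)*(n 2)*(n 3)*a^2*b + (p 1)*(p 3)*(n 2)*(n 3)*a*b^2 - (p 1)*(p 3)*(n 2)*a*d - (p 1)*(n 2)*(n 3)*a*b - (p 1)*(n 2)*(n 3)*b - (p 2)^2*(n 1)*(n 3)*a*b + (p 2)*(p 3)*(n 1)^2*a*b + (p 2)*(p 3)*(n 1)*(n 2)*b^2 - (p 2)*(p 3)*(n 1)*(n 2)*b - (p 2)*(p 3)*(n 1)*(n 3)*a^2*b - (p 2)*(p 3)*(n 1)*(n 3)*a*b^2 - (p 2)*(p 3)*(n 1)*a*b*d - (p 2)*(p 3)*(n 1)*b*d - (p 2)*(p 3)*(n 2)*b^2*d + (p 2)*(p 3)*(n 3)*b^2*d + (p 2)*(p 3)*b*d^2 - (p 2)*(n 1)*(n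 3)*a - (p 2)*(n 2)*(n 3)*b^2 - (p 3)^2*(n 1)*(n 2)*a*b + (p 3)*(n 1)*(n 2)*a + (p 3)*(n 2)*(n 3)*b^2 - (n 2)*(n 3)*b)"

lemma GG12: "GG a b p y 1 2 = Gp12 a b p y"
  unfolding GG_def Gp12_def
  by (simp add: sum_verts Bx_def Pm_def Mx_def graph3_def) algebra

lemma Gq12: "d \<noteq> 0 \<Longrightarrow> d * d * Gp12 a b p (\<lambda>i. n i / d) = Gq12 a b p n d"
  unfolding Gp12_def Gq12_def
  by (simp add: field_simps) algebra

lemma Gh12: "Gq12 a b p (Np a b p) (Dp a b p) = Gh12 a b p"
  unfolding Gq12_def Gh12_def Np_def Dp_def
  by simp algebra

lemma GGsol12: assumes "Dp a b p \<noteq> 0"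
  shows "Dp a b p * Dp a b p * GG a b p (sol a b p) 1 2 = Gh12 a b p"
proof -
  have "Gp12 a b p (sol a b p) = Gp12 a b p (\<lambda>i. Np a b p i / Dp a b p)"
    by (simp add: Gp12_def sol_def)
  then show ?thesis unfolding GG12 by (simp only: Gq12[OF assms] Gh12)
qed

lemma Hsplit12: "Gh12 a b p = H5_12 a b p + H6_12 a b p + H7_12 a b p"
  unfolding Gh12_def H5_12_def H6_12_def H7_12_def by algebra

lemma Hhom12: "H5_12 a b (\<lambda>i. t * v i) = t^5 * H5_12 a b v"
   "H6_12 a b (\<lambda>i. t * v i) = t^6 * H6_12 a b v"
   "H7_12 a b (\<lambda>i. t * v i) = t^7 * H7_12 a b v"
  unfolding H5_12_def H6_12_def H7_12_def by algebra+

lemma GG13: "GG a b p y 1 3 = Gp13 a b p y"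
  unfolding GG_def Gp13_def
  by (simp add: sum_verts Bx_def Pm_def Mx_def graph3_def) algebra

lemma Gq13: "d \<noteq> 0 \<Longrightarrow> d * d * Gp13 a b p (\<lambda>i. n i / d) = Gq13 a b p n d"
  unfolding Gp13_def Gq13_def
  by (simp add: field_simps) algebra

lemma Gh13: "Gq13 a b p (Np a b p) (Dp a b p) = Gh13 a b p"
  unfolding Gq13_def Gh13_def Np_def Dp_def
  by simp algebra

lemma GGsol13: assumes "Dp a b p \<noteq> 0"
  shows "Dp a b p * Dp a b p * GG a b p (sol a b p) 1 3 = Gh13 a b p"
proof -
  have "Gp13 a b p (sol a b p) = Gp13 a b p (\<lambda>i. Np a b p i / Dp a b p)"
    by (simp add: Gp13_def sol_def)
  then show ?thesis unfolding GG13 by (simp only: Gq13[OF assms] Gh13)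
qed

lemma Hsplit13: "Gh13 a b p = H5_13 a b p + H6_13 a b p + H7_13 a b p"
  unfolding Gh13_def H5_13_def H6_13_def H7_13_def by algebra

lemma Hhom13: "H5_13 a b (\<lambda>i. t * v i) = t^5 * H5_13 a b v"
   "H6_13 a b (\<lambda>i. t * v i) = t^6 * H6_13 a b v"
   "H7_13 a b (\<lambda>i. t * v i) = t^7 * H7_13 a b v"
  unfolding H5_13_def H6_13_def H7_13_def by algebra+

lemma GG23: "GG a b p y 2 3 = Gp23 a b p y"
  unfolding GG_def Gp23_def
  by (simp add: sum_verts Bx_def Pm_def Mx_def graph3_def) algebra

lemma Gq23: "d \<noteq> 0 \<Longrightarrow> d * d * Gp23 a b p (\<lambda>i. n i / d) = Gq23 a b p n d"
  unfolding Gp23_def Gq23_def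
  by (simp add: field_simps) algebra

lemma Gh23: "Gq23 a b p (Np a b p) (Dp a b p) = Gh23 a b p"
  unfolding Gq23_def Gh23_def Np_def Dp_def
  by simp algebra

lemma GGsol23: assumes "Dp a b p \<noteq> 0"
  shows "Dp a b p * Dp a b p * GG a b p (sol a b p) 2 3 = Gh23 a b p"
proof -
  have "Gp23 a b p (sol a b p) = Gp23 a b p (\<lambda>i. Np a b p i / Dp a b p)"
    by (simp add: Gp23_def sol_def)
  then show ?thesis unfolding GG23 by (simp only: Gq23[OF assms] Gh23)
qed

lemma Hsplit23: "Gh23 a b p = H5_23 a b p + H6_23 a b p + H7_23 a b p"
  unfolding Gh23_def H5_23_def H6_23_def H7_23_def by algebra

lemma Hhom23: "H5_23 a b (\<lambda>i. t * v i) = t^5 * H5_23 a b v"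
   "H6_23 a b (\<lambda>i. t * v i) = t^6 * H6_23 a b v"
   "H7_23 a b (\<lambda>i. t * v i) = t^7 * H7_23 a b v"
  unfolding H5_23_def H6_23_def H7_23_def by algebra+

lemma GG_anti: "GG a b p y j i = - GG a b p y i j"
  unfolding GG_def by (simp add: sum_verts Pm_def graph3_def)

lemma GG_diag: "GG a b p y i i = 0"
  unfolding GG_def by (simp add: sum_verts Pm_def graph3_def)

lemma ifdiv: "(d::'a::field) \<noteq> 0 \<Longrightarrow> (d*d*(if c then 1 else 0) + d*((if c then S else 0) + g*n))/(d*d) = (if c then 1 + S/d else 0) + g*(n/d)"
  by (cases c) (simp_all add: field_simps)

lemma MJ:
  assumes D: "Dp a b p \<noteq> 0" and i: "i \<in> verts" and k: "k \<in> verts"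
  shows "(\<Sum>j\<in>verts. Mx a b p i j * Jp a b p j k) = Bx a b (sol a b p) i k"
proof -
  have "(\<Sum>j\<in>verts. Mx a b p i j * Jp a b p j k)
      = (\<Sum>j\<in>verts. Mx a b p i j * (dNp a b p j k * Dp a b p - Np a b p j * dDp a b p k)) / (Dp a b p * Dp a b p)"
    unfolding Jp_def sum_divide_distrib by (simp add: times_divide_eq_right)
  also have "\<dots> = (Dp a b p * Dp a b p * (if i = k then 1 else 0) + Dp a b p * ((if i = k then (\<Sum>j\<in>verts. graph3 a b i j * Np a b p j) else 0) + graph3 a b i k * Np a b p i)) / (Dp a b p * Dp a b p)"
    by (simp only: polyMJ[OF i k])
  also have "\<dots> = Bx a b (sol a b p) i k"
  proof -
    have s: "(\<Sum>j\<in>verts. graph3 a b i j * sol a b p j) = (\<Sum>j\<in>verts. graph3 a b i j * Np a b p j) / Dp a b p"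
      by (simp add: sum_verts sol_def add_divide_distrib)
    have si: "sol a b p i = Np a b p i / Dp a b p" using i by (simp add: sol_def)
    show ?thesis unfolding Bx_def s si by (rule ifdiv[OF D])
  qed
  finally show ?thesis .
qed

lemma pb:
  assumes D: "Dp a b p \<noteq> 0" and i: "i \<in> verts" and j: "j \<in> verts"
  shows "pbracket (graph3 a b) (\<lambda>q. kahan (graph3 a b) q i) (\<lambda>q. kahan (graph3 a b) q j) p
     = (\<Sum>k\<in>verts. \<Sum>l\<in>verts. Jp a b p i k * Pm a b p k l * Jp a b p j l)"
  unfolding pbracket_def
  by (intro sum.cong refl) (simp add: pderiv_kahan[OF D i] pderiv_kahan[OF D j] Pm_def mult_ac)

lemma GG_zero:
  assumes "GG a b p y 1 2 = 0" "GG a b p y 1 3 = 0" "GG a b p y 2 3 = 0"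
    and i: "i \<in> verts" and j: "j \<in> verts"
  shows "GG a b p y i j = 0"
  using verts_cases[OF i] verts_cases[OF j] assms(1-3) GG_diag[of a b p y] GG_anti[of a b p y 2 1] GG_anti[of a b p y 3 1] GG_anti[of a b p y 3 2]
  by (elim disjE) simp_all

lemma if_dir:
  assumes h12: "\<And>p. Gh12 a b p = 0" and h13: "\<And>p. Gh13 a b p = 0" and h23: "\<And>p. Gh23 a b p = 0"
  shows "kahan_poisson (graph3 a b)"
  unfolding kahan_poisson_def
proof (intro allI impI ballI)
  fix p :: "nat \<Rightarrow> 'a" and i j
  assume reg: "kahan_regular (graph3 a b) p" and i: "i \<in> verts" and j: "j \<in> verts"
  have D: "Dp a b p \<noteq> 0" using reg reg_iff by blast
  have g12: "GG a b p (sol a b p) 1 2 = 0" using GGsol12[OF D] h12 D by simp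
  have g13: "GG a b p (sol a b p) 1 3 = 0" using GGsol13[OF D] h13 D by simp
  have g23: "GG a b p (sol a b p) 2 3 = 0" using GGsol23[OF D] h23 D by simp
  have BPB: "(\<Sum>k\<in>verts. \<Sum>l\<in>verts. Bx a b (sol a b p) a' k * Pm a b p k l * Bx a b (sol a b p) b' l)
     = (\<Sum>k\<in>verts. \<Sum>l\<in>verts. Mx a b p a' k * Pm a b (sol a b p) k l * Mx a b p b' l)"
    if "a' \<in> verts" "b' \<in> verts" for a' b'
    using GG_zero[OF g12 g13 g23 that] unfolding GG_def by simp
  have "(\<Sum>k\<in>verts. \<Sum>l\<in>verts. Jp a b p i k * Pm a b p k l * Jp a b p j l) = Pm a b (sol a b p) i j"
    apply (rule mat_cancel[where M = "Mx a b p" and B = "Bx a b (sol a b p)" and J = "Jp a b p" and P = "Pm a b p" and Q = "Pm a b (sol a b p)"])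
    subgoal using D by (simp add: Dp_det)
    subgoal using MJ[OF D] by blast
    subgoal by (rule BPB)
    subgoal by (rule i)
    subgoal by (rule j)
    done
  then show "pbracket (graph3 a b) (\<lambda>q. kahan (graph3 a b) q i) (\<lambda>q. kahan (graph3 a b) q j) p =
          graph3 a b i j * kahan (graph3 a b) p i * kahan (graph3 a b) p j"
    using pb[OF D i j] kahan_eq[OF D] by (simp add: Pm_def)
qed

lemma good0: "Gh12 (0) (0) p = 0" "Gh13 (0) (0) p = 0" "Gh23 (0) (0) p = 0"
  unfolding Gh12_def Gh13_def Gh23_def by (simp; algebra)+

lemma good1: "Gh12 (0) (-1) p = 0" "Gh13 (0) (-1) p = 0" "Gh23 (0) (-1) p = 0"
  unfolding Gh12_def Gh13_def Gh23_def by (simp; algebra)+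

lemma good2: "Gh12 (1) (0) p = 0" "Gh13 (1) (0) p = 0" "Gh23 (1) (0) p = 0"
  unfolding Gh12_def Gh13_def Gh23_def by (simp; algebra)+

lemma good3: "Gh12 (1) (-1) p = 0" "Gh13 (1) (-1) p = 0" "Gh23 (1) (-1) p = 0"
  unfolding Gh12_def Gh13_def Gh23_def by (simp; algebra)+

lemma good4: "Gh12 (1) (1) p = 0" "Gh13 (1) (1) p = 0" "Gh23 (1) (1) p = 0"
  unfolding Gh12_def Gh13_def Gh23_def by (simp; algebra)+

lemma good5: "Gh12 (-1) (-1) p = 0" "Gh13 (-1) (-1) p = 0" "Gh23 (-1) (-1) p = 0"
  unfolding Gh12_def Gh13_def Gh23_def by (simp; algebra)+

lemma onlyif_Gh:
  assumes kp: "kahan_poisson (graph3 a b)" and D: "Dp a b p \<noteq> 0"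
  shows "Gh12 a b p = 0 \<and> Gh13 a b p = 0 \<and> Gh23 a b p = 0"
proof -
  have X: "(\<Sum>k\<in>verts. \<Sum>l\<in>verts. Jp a b p i k * Pm a b p k l * Jp a b p j l) = Pm a b (sol a b p) i j"
    if i: "i \<in> verts" and j: "j \<in> verts" for i j
  proof -
    have "kahan_regular (graph3 a b) p" using D reg_iff by blast
    then have "pbracket (graph3 a b) (\<lambda>q. kahan (graph3 a b) q i) (\<lambda>q. kahan (graph3 a b) q j) p =
          graph3 a b i j * kahan (graph3 a b) p i * kahan (graph3 a b) p j"
      using kp i j unfolding kahan_poisson_def by blast
    then show ?thesis using pb[OF D i j] kahan_eq[OF D] by (simp add: Pm_def)
  qed
  have G0: "GG a b p (sol a b p) a' b' = 0" if "a' \<in> verts" "b' \<in> verts" for a' b'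
  proof -
    have "(\<Sum>i\<in>verts. \<Sum>j\<in>verts. Bx a b (sol a b p) a' i * Pm a b p i j * Bx a b (sol a b p) b' j)
        = (\<Sum>k\<in>verts. \<Sum>l\<in>verts. Mx a b p a' k * Pm a b (sol a b p) k l * Mx a b p b' l)"
      apply (rule mat_fwd[where J = "Jp a b p"])
      subgoal using MJ[OF D] by blast
      subgoal by (rule X)
      subgoal by (rule that(1))
      subgoal by (rule that(2))
      done
    then show ?thesis unfolding GG_def by simp
  qed
  show ?thesis
    using GGsol12[OF D] GGsol13[OF D] GGsol23[OF D] G0[of 1 2] G0[of 1 3] G0[of 2 3] by simp
qed

lemma Dp_scale_cont: "isCont (\<lambda>t. Dp a b (\<lambda>i. t * v i)) 0"
  unfolding Dp_def by (intro continuous_intros)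

lemma Dp_zero: "Dp a b (\<lambda>i. 0) = 1"
  unfolding Dp_def by simp

lemma scale_gen:
  fixes H5 H6 H7 :: "(nat \<Rightarrow> 'a::real_normed_field) \<Rightarrow> 'a"
  assumes hom5: "\<And>t v. H5 (\<lambda>i. t * v i) = t^5 * H5 v"
    and hom6: "\<And>t v. H6 (\<lambda>i. t * v i) = t^6 * H6 v"
    and hom7: "\<And>t v. H7 (\<lambda>i. t * v i) = t^7 * H7 v"
    and zero: "\<And>p. Dp a b p \<noteq> 0 \<Longrightarrow> H5 p + H6 p + H7 p = 0"
  shows "H5 v = 0"
proof (rule ccontr)
  assume nz: "H5 v \<noteq> 0"
  define f where "f t = H5 v + t * H6 v + t^2 * H7 v" for t :: 'a
  have "isCont f 0" unfolding f_def by (intro continuous_intros)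
  then have "(f \<longlongrightarrow> f 0) (at 0)" by (simp add: isCont_def)
  then have ef: "eventually (\<lambda>t. f t \<noteq> 0) (at 0)"
    by (rule tendsto_imp_eventually_ne) (simp add: f_def nz)
  have "((\<lambda>t. Dp a b (\<lambda>i. t * v i)) \<longlongrightarrow> Dp a b (\<lambda>i. 0 * v i)) (at 0)"
    using Dp_scale_cont[of a b v] by (simp add: isCont_def)
  then have eg: "eventually (\<lambda>t. Dp a b (\<lambda>i. t * v i) \<noteq> 0) (at 0)"
    by (rule tendsto_imp_eventually_ne) (simp add: Dp_zero)
  have et: "eventually (\<lambda>t::'a. t \<noteq> 0) (at 0)"
    by (simp add: eventually_at_filter)
  have "eventually (\<lambda>t. f t \<noteq> 0 \<and> Dp a b (\<lambda>i. t * v i) \<noteq> 0 \<and> t \<noteq> 0) (at (0::'a))"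
    using eventually_conj[OF ef eventually_conj[OF eg et]] by simp
  then obtain t where t: "f t \<noteq> 0" "Dp a b (\<lambda>i. t * v i) \<noteq> 0" "t \<noteq> 0"
    using eventually_happens'[OF at_neq_bot] by blast
  have "H5 (\<lambda>i. t * v i) + H6 (\<lambda>i. t * v i) + H7 (\<lambda>i. t * v i) = 0" using zero[OF t(2)] .
  then have "t^5 * f t = 0" unfolding hom5 hom6 hom7 f_def by (simp add: algebra_simps power2_eq_square power_def)
  with t show False by simp
qed

lemma H5_all:
  assumes kp: "kahan_poisson (graph3 a b)"
  shows "H5_12 a b v = 0" "H5_13 a b v = 0" "H5_23 a b v = 0"
proof -
  show "H5_12 a b v = 0"
    apply (rule scale_gen[of "H5_12 a b" "H6_12 a b" "H7_12 a b" a b v])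
    subgoal by (rule Hhom12(1))
    subgoal by (rule Hhom12(2))
    subgoal by (rule Hhom12(3))
    subgoal for p using onlyif_Gh[OF kp, of p] Hsplit12[of a b p] by simp
    done
  show "H5_13 a b v = 0"
    apply (rule scale_gen[of "H5_13 a b" "H6_13 a b" "H7_13 a b" a b v])
    subgoal by (rule Hhom13(1))
    subgoal by (rule Hhom13(2))
    subgoal by (rule Hhom13(3))
    subgoal for p using onlyif_Gh[OF kp, of p] Hsplit13[of a b p] by simp
    done
  show "H5_23 a b v = 0"
    apply (rule scale_gen[of "H5_23 a b" "H6_23 a b" "H7_23 a b" a b v])
    subgoal by (rule Hhom23(1))
    subgoal by (rule Hhom23(2))
    subgoal by (rule Hhom23(3))
    subgoal for p using onlyif_Gh[OF kp, of p] Hsplit23[of a b p] by simp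
    done
qed

definition vA :: "'a::real_normed_field \<Rightarrow> nat \<Rightarrow> 'a" where "vA y = (\<lambda>i. if i = 2 then y else 1)"
definition vB :: "'a::real_normed_field \<Rightarrow> nat \<Rightarrow> 'a" where "vB y = (\<lambda>i. if i = 1 then y else 1)"

lemma c13: "6 * (- 2 * b^3 + 2 * b) = H5_13 a b (vA 2) - 3 * H5_13 a b (vA 1) - H5_13 a b (vA (-1))"
  unfolding H5_13_def vA_def by (simp; algebra)
lemma c23: "6 * (2 * a^3 - 2 * a) = H5_23 a b (vB 2) - 3 * H5_23 a b (vB 1) - H5_23 a b (vB (-1))"
  unfolding H5_23_def vB_def by (simp; algebra)
lemma c12A: "6 * (- 2*a*b^2 - 2*a*b + 2*b^3 + 2*b^2) = H5_12 a b (vA 2) - 3 * H5_12 a b (vA 1) - H5_12 a b (vA (-1))"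
  unfolding H5_12_def vA_def by (simp; algebra)
lemma c12B: "6 * (2*a^3 - 2*a^2*b - 2*a^2 + 2*a*b) = H5_12 a b (vB 2) - 3 * H5_12 a b (vB 1) - H5_12 a b (vB (-1))"
  unfolding H5_12_def vB_def by (simp; algebra)

lemma cubic_roots:
  fixes b :: "'a::real_normed_field"
  assumes "- 2 * b^3 + 2 * b = 0"
  shows "b = 0 \<or> b = 1 \<or> b = -1"
proof -
  have "-2 * (b * (b - 1) * (b + 1)) = 0" using assms by (simp add: algebra_simps power3_eq_cube)
  then have "b * (b - 1) * (b + 1) = 0" by simp
  then show ?thesis by (auto simp: eq_neg_iff_add_eq_0)
qed

lemma onlyif_dir:
  fixes a b :: "'a::real_normed_field"
  assumes kp: "kahan_poisson (graph3 a b)"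
  shows "(a, b) \<in> {(0,0), (0,-1), (1,0), (1,-1), (1,1), (-1,-1)}"
proof -
  note h = H5_all[OF kp]
  have "6 * (- 2 * b^3 + 2 * b) = 0" unfolding c13[of b a] h by simp
  then have eb: "- 2 * b^3 + 2 * b = 0" by (subst (asm) mult_eq_0_iff) simp
  have "6 * (2 * a^3 - 2 * a) = 0" unfolding c23[of a b] h by simp
  then have "2 * a^3 - 2 * a = 0" by (subst (asm) mult_eq_0_iff) simp
  then have ea: "- 2 * a^3 + 2 * a = 0" by (simp add: algebra_simps)
  have "6 * (- 2*a*b^2 - 2*a*b + 2*b^3 + 2*b^2) = 0" unfolding c12A[of a b] h by simp
  then have e1: "- 2*a*b^2 - 2*a*b + 2*b^3 + 2*b^2 = 0" by (subst (asm) mult_eq_0_iff) simp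
  have "6 * (2*a^3 - 2*a^2*b - 2*a^2 + 2*a*b) = 0" unfolding c12B[of a b] h by simp
  then have e2: "2*a^3 - 2*a^2*b - 2*a^2 + 2*a*b = 0" by (subst (asm) mult_eq_0_iff) simp
  from cubic_roots[OF ea] cubic_roots[OF eb] e1 e2 show ?thesis
    by auto
qed

lemma char_iff:
  fixes a b :: "'a::real_normed_field"
  shows "kahan_poisson (graph3 a b) \<longleftrightarrow> (a, b) \<in> {(0,0), (0,-1), (1,0), (1,-1), (1,1), (-1,-1)}"
proof
  assume "kahan_poisson (graph3 a b)" then show "(a, b) \<in> {(0,0), (0,-1), (1,0), (1,-1), (1,1), (-1,-1)}"
    by (rule onlyif_dir)
next
  assume "(a, b) \<in> {(0,0), (0,-1), (1,0), (1,-1), (1,1), (-1,-1)}"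
  then consider "a = 0 \<and> b = 0" | "a = 0 \<and> b = -1" | "a = 1 \<and> b = 0" | "a = 1 \<and> b = -1" | "a = 1 \<and> b = 1" | "a = -1 \<and> b = -1"
    by auto
  then show "kahan_poisson (graph3 a b)"
  proof cases
    case 1 then have "a = 0" "b = 0" by auto
    then show ?thesis by (simp only:) (rule if_dir; rule good0)
  next
    case 2 then have "a = 0" "b = -1" by auto
    then show ?thesis by (simp only:) (rule if_dir; rule good1)
  next
    case 3 then have "a = 1" "b = 0" by auto
    then show ?thesis by (simp only:) (rule if_dir; rule good2)
  next
    case 4 then have "a = 1" "b = -1" by auto
    then show ?thesis by (simp only:) (rule if_dir; rule good3)
  next
    case 5 then have "a = 1" "b = 1" by auto
    then show ?thesis by (simp only:) (rule if_dir; rule good4)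
  next
    case 6 then have "a = -1" "b = -1" by auto
    then show ?thesis by (simp only:) (rule if_dir; rule good5)
  qed
qed

theorem mainTheorem5:
  shows "(\<forall>\<alpha> \<beta> :: real. kahan_poisson (graph3 \<alpha> \<beta>) \<longleftrightarrow>
            (\<alpha>, \<beta>) \<in> {(0,0), (0,-1), (1,0), (1,-1), (1,1), (-1,-1)})
       \<and> (\<forall>\<alpha> \<beta> :: complex. kahan_poisson (graph3 \<alpha> \<beta>) \<longleftrightarrow>
            (\<alpha>, \<beta>) \<in> {(0,0), (0,-1), (1,0), (1,-1), (1,1), (-1,-1)})"
  by (intro conjI allI) (rule char_iff)+

end
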